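(* Let $y$ be a Lyndon word of length $n>1$ over a totally ordered alphabet. Run Algorithm LeftLyndonTree (described in the context) on $y$. Then the algorithm creates exactly the $n-1$ internal nodes of the left Lyndon tree $\mathrm{LLT}(y)$, and the order in which it creates them is the order of their associated prefixes under the infinite ordering $\prec$: if node $q$ is created before node $q'$, then the prefix associated with $q$ is $\prec$-smaller than the prefix associated with $q'$. Equivalently, listing the internal nodes in creation order lists the proper non-empty prefixes of $y$ in strictly $\prec$-increasing order.
   Context: Words are finite sequences $y=y[0]y[1]\cdots y[n-1]$ over a totally ordered alphabet. $y[i\,..\,j]$ denotes the factor $y[i]\cdots y[j]$. Lexicographic order $<$: $u<v$ if $u$ is a proper prefix of $v$, or $u=ras$, $v=rbt$ for words $r,s,t$ and letters $a<b$. Lyndon word: a non-empty word $w$ such that $w<v$ for every proper non-empty suffix $v$ of $w$. Infinite ordering: $u^\infty$ is the infinite word $uuu\cdots$, compared lexicographically. For non-empty words $u,v$, $u\prec v$ iff $u^\infty<v^\infty$, or $u^\infty=v^\infty$ and $|u|>|v|$. Left Lyndon tree $\mathrm{LLT}(y)$ of a Lyndon word $y$: if $|y|=1$ it is a single leaf; otherwise write $y=uv$ where $u$ is the longest proper prefix of $y$ that is a Lyndon word (then $v$ is a Lyndon word), and $\mathrm{LLT}(y)$ is a root whose left subtree is $\mathrm{LLT}(u)$ and right subtree is $\mathrm{LLT}(v)$. The leaves, read left to right, are identified with the positions $0,1,\dots,n-1$ of $y$. Each internal node spans a factor $y[s\,..\,t]$ whose left child spans $y[s\,..\,m]$ for some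 $m$ with $s\le m<t$; the prefix associated with this internal node is $y[0\,..\,m]$. This gives a bijection between internal nodes and proper non-empty prefixes of $y$. Algorithm LeftLyndonTree (input: Lyndon word $y$ of length $n$; arrays lyns, root indexed by positions; internal nodes are fresh identifiers $\ge n$ with left and right child pointers): lyns[0] ← 1; root[0] ← 0; per ← 1; i ← 0. For j = 1 to n−1: root[j] ← j; if y[j] ≠ y[i] then { lyns[j] ← j+1; per ← j+1; i ← 0 } else { lyns[j] ← lyns[i]; i ← (i+1) mod per }; ℓ ← 1; k ← j−1; while ℓ < lyns[j]: { create a new internal node q with left child root[k] and right child root[j]; root[j] ← q; ℓ ← ℓ + lyns[k]; k ← k − lyns[k] }. Return root[n−1] (the root of the constructed binary tree). *)

theory Defs
  imports "HOL-Library.While_Combinator"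
begin

definition lexless :: "'a::linorder list \<Rightarrow> 'a list \<Rightarrow> bool" where
  "lexless u v \<longleftrightarrow>
     (\<exists>w. w \<noteq> [] \<and> v = u @ w) \<or>
     (\<exists>r a b s t. a < b \<and> u = r @ a # s \<and> v = r @ b # t)"

definition lyndon :: "'a::linorder list \<Rightarrow> bool" where
  "lyndon w \<longleftrightarrow> w \<noteq> [] \<and> (\<forall>k. 0 < k \<and> k < length w \<longrightarrow> lexless w (drop k w))"

definition pow_inf :: "'a list \<Rightarrow> nat \<Rightarrow> 'a" where
  "pow_inf u i = u ! (i mod length u)"

definition inf_lexless :: "(nat \<Rightarrow> 'a::linorder) \<Rightarrow> (nat \<Rightarrow> 'a) \<Rightarrow> bool" where
  "inf_lexless f g \<longleftrightarrow> (\<exists>k. (\<forall>i<k. f i = g i) \<and> f k < g k)"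

definition inf_prec :: "'a::linorder list \<Rightarrow> 'a list \<Rightarrow> bool" where
  "inf_prec u v \<longleftrightarrow> inf_lexless (pow_inf u) (pow_inf v) \<or>
                      (pow_inf u = pow_inf v \<and> length u > length v)"

text \<open>Binary trees whose leaves carry positions of y; internal nodes carry no data.\<close>
datatype tree = Leaf nat | Node tree tree

definition llp :: "'a::linorder list \<Rightarrow> nat" where
  "llp w = (GREATEST m. 0 < m \<and> m < length w \<and> lyndon (take m w))"

text \<open>llt_at w s: the left Lyndon tree of the factor w, whose first letter sits at
  position s of the whole word (so leaves are labelled by positions of y).\<close>
function llt_at :: "'a::linorder list \<Rightarrow> nat \<Rightarrow> tree" where
  "llt_at w s =
     (if length w \<le> 1 then Leaf s
      else (let m = llp w in
            if 0 < m \<and> m < length w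
            then Node (llt_at (take m w) s) (llt_at (drop m w) (s + m))
            else Leaf s))"
  by pat_completeness auto
termination
  by (relation "measure (\<lambda>(w, s). length w)") auto

definition LLT :: "'a::linorder list \<Rightarrow> tree" where
  "LLT y = llt_at y 0"

record alg_state =
  lyns :: "nat \<Rightarrow> nat"
  root :: "nat \<Rightarrow> nat"
  per :: nat
  idx :: nat
  lchild :: "nat \<Rightarrow> nat"
  rchild :: "nat \<Rightarrow> nat"
  fresh :: nat
  created :: "nat list"

definition inner_step :: "nat \<Rightarrow> alg_state \<times> nat \<times> nat \<Rightarrow> alg_state \<times> nat \<times> nat" where
  "inner_step j = (\<lambda>(s, l, k).
     (let q = fresh s in
      (s\<lparr> lchild := (lchild s)(q := root s k),
          rchild := (rchild s)(q := root s j),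
          root := (root s)(j := q),
          fresh := Suc q,
          created := created s @ [q] \<rparr>,
       l + lyns s k, k - lyns s k)))"

definition inner_loop :: "nat \<Rightarrow> alg_state \<Rightarrow> alg_state option" where
  "inner_loop j s =
     map_option fst
       (while_option (\<lambda>(s, l, k). l < lyns s j) (inner_step j) (s, 1, j - 1))"

definition outer_step :: "'a list \<Rightarrow> nat \<Rightarrow> alg_state \<Rightarrow> alg_state option" where
  "outer_step y j s =
     (let s1 = s\<lparr> root := (root s)(j := j) \<rparr>;
          s2 = (if y ! j \<noteq> y ! idx s1
                then s1\<lparr> lyns := (lyns s1)(j := Suc j), per := Suc j, idx := 0 \<rparr>
                else s1\<lparr> lyns := (lyns s1)(j := lyns s1 (idx s1)),
                         idx := (Suc (idx s1)) mod per s1 \<rparr>)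
      in inner_loop j s2)"

definition init_state :: "nat \<Rightarrow> alg_state" where
  "init_state n = \<lparr> lyns = (\<lambda>_. 0)(0 := 1), root = (\<lambda>_. 0), per = 1, idx = 0,
                    lchild = (\<lambda>_. 0), rchild = (\<lambda>_. 0), fresh = n, created = [] \<rparr>"

text \<open>Run of the algorithm on y; None if some inner loop does not terminate.
  The returned root is root (n-1) of the final state.\<close>
definition left_lyndon_tree_alg :: "'a list \<Rightarrow> alg_state option" where
  "left_lyndon_tree_alg y =
     fold (\<lambda>j so. Option.bind so (outer_step y j)) [1..<length y]
          (Some (init_state (length y)))"

text \<open>represents s n q t: identifier q denotes the tree t in the pointer structure
  of state s (identifiers < n are leaves = positions).\<close>
inductive represents :: "alg_state \<Rightarrow> nat \<Rightarrow> nat \<Rightarrow> tree \<Rightarrow> bool" where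
  leaf: "q < n \<Longrightarrow> represents s n q (Leaf q)"
| node: "n \<le> q \<Longrightarrow> represents s n (lchild s q) t1 \<Longrightarrow> represents s n (rchild s q) t2
         \<Longrightarrow> represents s n q (Node t1 t2)"

inductive reach :: "alg_state \<Rightarrow> nat \<Rightarrow> nat \<Rightarrow> nat \<Rightarrow> bool" where
  self: "reach s n r r"
| left: "reach s n r q \<Longrightarrow> n \<le> q \<Longrightarrow> reach s n r (lchild s q)"
| right: "reach s n r q \<Longrightarrow> n \<le> q \<Longrightarrow> reach s n r (rchild s q)"

fun rightmost_leaf :: "tree \<Rightarrow> nat" where
  "rightmost_leaf (Leaf p) = p"
| "rightmost_leaf (Node l r) = rightmost_leaf r"

definition assoc_prefix :: "'a list \<Rightarrow> alg_state \<Rightarrow> nat \<Rightarrow> 'a list" where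
  "assoc_prefix y s q =
     take (Suc (rightmost_leaf (THE t. represents s (length y) (lchild s q) t))) y"

end

theory Submission
  imports Defs
begin


lemma lexless_lexordp: "lexless u v = ord_class.lexordp u v"
  unfolding lexless_def lexordp_iff
  by (metis append_Cons append_Nil2 neq_Nil_conv)

lemma lexordp_idxI:
  fixes u v :: "'a::linorder list"
  assumes "i < length u" "i < length v" "\<forall>t<i. u!t = v!t" "u!i < v!i"
  shows "ord_class.lexordp u v"
proof -
  have "take i u = take i v" using assms by (intro nth_equalityI) auto
  moreover have "u = take i u @ u!i # drop (Suc i) u" using assms(1) by (simp add: id_take_nth_drop)
  moreover have "v = take i v @ v!i # drop (Suc i) v" using assms(2) by (simp add: id_take_nth_drop)
  ultimately show ?thesis using assms(4)
    by (metis lexordp_append_left_rightI)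
qed

lemma lexordp_app_strict:
  fixes u v :: "'a::linorder list"
  assumes "ord_class.lexordp u v" "length v \<le> length u"
  shows "ord_class.lexordp (u @ w) (v @ w')"
proof -
  from assms(1) have "(\<exists>x vs. v = u @ x # vs) \<or> (\<exists>us a b vs ws. a < b \<and> u = us @ a # vs \<and> v = us @ b # ws)"
    by (simp add: lexordp_iff)
  then obtain us a b vs ws where "a < b" "u = us @ a # vs" "v = us @ b # ws"
    using assms(2) by auto
  then show ?thesis by (simp add: lexordp_append_left_rightI)
qed

lemma lyndon_suf:
  "lyndon w \<Longrightarrow> 0 < k \<Longrightarrow> k < length w \<Longrightarrow> ord_class.lexordp w (drop k w)"
  by (simp add: lyndon_def lexless_lexordp)

lemma lyndon_ne: "lyndon w \<Longrightarrow> w \<noteq> []"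
  by (simp add: lyndon_def)

lemma lyndon_single: "lyndon [a]"
  by (simp add: lyndon_def)

lemma lexordp_prefix_not:
  fixes u :: "'a::linorder list"
  shows "ord_class.lexordp (u @ v) u \<Longrightarrow> False"
  using lexordp_conv_lexordp_eq lexordp_eq_pref by blast

lemma lyndon_unbordered:
  fixes w :: "'a::linorder list"
  assumes "lyndon w" "0 < k" "k < length w"
  shows "drop k w \<noteq> take (length w - k) w"
proof
  assume h: "drop k w = take (length w - k) w"
  have "ord_class.lexordp w (drop k w)" using assms by (rule lyndon_suf)
  hence "ord_class.lexordp (take (length w - k) w @ drop (length w - k) w) (take (length w - k) w)"
    using h by simp
  thus False by (rule lexordp_prefix_not)
qed

lemma lexordp_left_lyndon:
  fixes u v :: "'a::linorder list"
  assumes "lyndon u" "lyndon v" "ord_class.lexordp u v"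
  shows "ord_class.lexordp (u @ v) v"
proof -
  from assms(3) have "(\<exists>x vs. v = u @ x # vs) \<or> (\<exists>us a b vs ws. a < b \<and> u = us @ a # vs \<and> v = us @ b # ws)"
    by (simp add: lexordp_iff)
  then show ?thesis
  proof
    assume "\<exists>x vs. v = u @ x # vs"
    then obtain x vs where v: "v = u @ x # vs" by blast
    have "u \<noteq> []" using assms(1) by (rule lyndon_ne)
    hence "ord_class.lexordp v (drop (length u) v)"
      using assms(2) v by (intro lyndon_suf) auto
    hence "ord_class.lexordp (u @ v) (u @ drop (length u) v)"
      by (rule lexordp_append_leftI)
    thus ?thesis using v by simp
  next
    assume "\<exists>us a b vs ws. a < b \<and> u = us @ a # vs \<and> v = us @ b # ws"
    then obtain us a b vs ws where "a < b" "u = us @ a # vs" "v = us @ b # ws" by blast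
    thus ?thesis by (simp add: lexordp_append_left_rightI)
  qed
qed

lemma lyndon_cat:
  fixes u v :: "'a::linorder list"
  assumes "lyndon u" "lyndon v" "ord_class.lexordp u v"
  shows "lyndon (u @ v)"
  unfolding lyndon_def lexless_lexordp
proof (intro conjI allI impI)
  show "u @ v \<noteq> []" using assms(1) lyndon_ne by auto
  fix k assume k: "0 < k \<and> k < length (u @ v)"
  have key: "ord_class.lexordp (u @ v) v" using assms by (rule lexordp_left_lyndon)
  consider "k < length u" | "k = length u" | "length u < k" by linarith
  then show "ord_class.lexordp (u @ v) (drop k (u @ v))"
  proof cases
    case 1
    have "ord_class.lexordp u (drop k u)" using assms(1) 1 k by (intro lyndon_suf) auto
    hence "ord_class.lexordp (u @ v) (drop k u @ v)" by (rule lexordp_app_strict) simp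
    thus ?thesis using 1 by simp
  next
    case 2 thus ?thesis using key by simp
  next
    case 3
    have "ord_class.lexordp v (drop (k - length u) v)" using assms(2) 3 k by (intro lyndon_suf) auto
    hence "ord_class.lexordp (u @ v) (drop (k - length u) v)" using key lexordp_trans by blast
    thus ?thesis using 3 by simp
  qed
qed

lemma lyndon_overlap:
  fixes x t z :: "'a::linorder list"
  assumes "lyndon (x @ t)" "lyndon (t @ z)" "x \<noteq> []" "t \<noteq> []"
  shows "lyndon (x @ t @ z)"
  unfolding lyndon_def lexless_lexordp
proof (intro conjI allI impI)
  show "x @ t @ z \<noteq> []" using assms by auto
  fix k assume k: "0 < k \<and> k < length (x @ t @ z)"
  have "ord_class.lexordp (x @ t) (drop (length x) (x @ t))"
    using assms by (intro lyndon_suf) auto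
  hence "ord_class.lexordp ((x @ t) @ z) (t @ z)"
    by (intro lexordp_app_strict) auto
  hence key: "ord_class.lexordp (x @ t @ z) (t @ z)" by simp
  consider "k < length x" | "k = length x" | "length x < k" by linarith
  then show "ord_class.lexordp (x @ t @ z) (drop k (x @ t @ z))"
  proof cases
    case 1
    have "ord_class.lexordp (x @ t) (drop k (x @ t))" using assms(1) 1 k by (intro lyndon_suf) auto
    hence "ord_class.lexordp ((x @ t) @ z) (drop k (x @ t) @ z)" by (rule lexordp_app_strict) simp
    thus ?thesis using 1 by simp
  next
    case 2 thus ?thesis using key by simp
  next
    case 3
    have "ord_class.lexordp (t @ z) (drop (k - length x) (t @ z))" using assms(2) 3 k by (intro lyndon_suf) auto
    hence "ord_class.lexordp (x @ t @ z) (drop (k - length x) (t @ z))" using key lexordp_trans by blast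
    thus ?thesis using 3 by simp
  qed
qed



definition pon :: "'a list \<Rightarrow> nat \<Rightarrow> nat \<Rightarrow> bool" where
  "pon y m j \<longleftrightarrow> (\<forall>i<j. y!i = y!(i mod m))"

definition shp :: "'a list \<Rightarrow> nat \<Rightarrow> nat \<Rightarrow> bool" where
  "shp y s m \<longleftrightarrow> (\<forall>t. s + t < m \<longrightarrow> y!(s+t) = y!t)"

lemma pon_shp:
  assumes "0 < m" shows "pon y m j = shp y m j"
proof
  assume h: "pon y m j" show "shp y m j"
    unfolding shp_def
  proof (intro allI impI)
    fix t assume t: "m + t < j"
    have "y!(m+t) = y!((m+t) mod m)" using h t unfolding pon_def by blast
    also have "(m+t) mod m = t mod m" by simp
    also have "y!(t mod m) = y!t" using h t unfolding pon_def by simp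
    finally show "y!(m+t) = y!t" .
  qed
next
  assume h: "shp y m j"
  show "pon y m j" unfolding pon_def
  proof (intro allI impI)
    fix i show "i < j \<Longrightarrow> y ! i = y ! (i mod m)"
    proof (induction i rule: less_induct)
      case (less i)
      show ?case
      proof (cases "i < m")
        case True thus ?thesis by simp
      next
        case False
        have e1: "m + (i - m) < j" using less.prems False by simp
        have "y!i = y!(m + (i - m))" using False by simp
        also have "\<dots> = y!(i - m)" using h e1 unfolding shp_def by blast
        also have "\<dots> = y!((i - m) mod m)" using less.IH[of "i-m"] less.prems assms False by simp
        also have "(i - m) mod m = i mod m" using False by (simp add: le_mod_geq)
        finally show ?thesis .
      qed
    qed
  qed
qed

lemma pon_eq:
  "pon y m j \<Longrightarrow> i < j \<Longrightarrow> i' < j \<Longrightarrow> i mod m = i' mod m \<Longrightarrow> y!i = y!i'"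
  unfolding pon_def by (metis (no_types))

lemma pon_mono: "pon y m j \<Longrightarrow> j' \<le> j \<Longrightarrow> pon y m j'"
  unfolding pon_def by auto

lemma LS:
  fixes y :: "'a::linorder list"
  assumes "lyndon y" "0 < s" "s < length y"
  shows "\<exists>i. s + i < length y \<and> (\<forall>t<i. y!t = y!(s+t)) \<and> y!i < y!(s+i)"
proof -
  have "ord_class.lexordp y (drop s y)" using assms by (rule lyndon_suf)
  hence "(\<exists>x vs. drop s y = y @ x # vs) \<or> (\<exists>us a b vs ws. a < b \<and> y = us @ a # vs \<and> drop s y = us @ b # ws)"
    by (simp add: lexordp_iff)
  moreover have "\<not> (\<exists>x vs. drop s y = y @ x # vs)"
  proof
    assume "\<exists>x vs. drop s y = y @ x # vs"
    then obtain x vs where "drop s y = y @ x # vs" by blast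
    hence "length (drop s y) = length (y @ x # vs)" by simp
    thus False by simp
  qed
  ultimately obtain us a b vs ws where h: "a < b" "y = us @ a # vs" "drop s y = us @ b # ws" by blast
  let ?i = "length us"
  have len: "?i < length (drop s y)" using h(3) by simp
  have "\<forall>t<?i. y!t = y!(s+t)"
  proof (intro allI impI)
    fix t assume "t < ?i"
    hence "y!t = us!t" "drop s y ! t = us ! t" using h by (simp_all add: nth_append)
    moreover have "drop s y ! t = y!(s+t)" using len \<open>t < ?i\<close> by simp
    ultimately show "y!t = y!(s+t)" by simp
  qed
  moreover have "y!?i = a" using h(2) by simp
  moreover have "drop s y ! ?i = b" using h(3) by simp
  hence "y!(s+?i) = b" using len by simp
  ultimately show ?thesis using len h(1) by (intro exI[of _ ?i]) auto
qed

lemma LS_cmp: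
  fixes y :: "'a::linorder list"
  assumes "lyndon y" "0 < s" "s + i < length y" "\<forall>t<i. y!t = y!(s+t)" "y!i \<noteq> y!(s+i)"
  shows "y!i < y!(s+i)"
proof -
  obtain i0 where h: "s + i0 < length y" "\<forall>t<i0. y!t = y!(s+t)" "y!i0 < y!(s+i0)"
    using LS[OF assms(1,2)] assms(3) by fastforce
  have "i0 = i"
  proof (rule ccontr)
    assume "i0 \<noteq> i"
    hence "i0 < i \<or> i < i0" by arith
    thus False
    proof
      assume "i0 < i" hence "y!i0 = y!(s+i0)" using assms(4) by blast
      with h(3) show False by simp
    next
      assume "i < i0" hence "y!i = y!(s+i)" using h(2) by blast
      with assms(5) show False by simp
    qed
  qed
  thus ?thesis using h by simp
qed

lemma D0:
  fixes y :: "'a::linorder list"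
  assumes "lyndon y" "0 < m" "d < length y" "pon y m d" "y!d \<noteq> y!(d mod m)"
  shows "y!(d mod m) < y!d"
proof -
  have "m \<le> d" using assms(5) by (cases "d < m") auto
  define s where "s = d - d mod m"
  have s: "s = m * (d div m)" unfolding s_def by (simp add: minus_mod_eq_mult_div)
  have "0 < d div m" using \<open>m \<le> d\<close> assms(2) by (simp add: div_greater_zero_iff)
  hence "0 < s" using s assms(2) by simp
  have sd: "s + d mod m = d" unfolding s_def by simp
  have "\<forall>t<d mod m. y!t = y!(s+t)"
  proof (intro allI impI)
    fix t assume t: "t < d mod m"
    have "d mod m < m" using assms(2) by simp
    hence "t < m" using t by simp
    have "s + t < d" using sd t by simp
    hence "y!(s+t) = y!((s+t) mod m)" using assms(4) unfolding pon_def by blast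
    also have "(s+t) mod m = t" using s \<open>t < m\<close> by simp
    finally show "y!t = y!(s+t)" by simp
  qed
  thus ?thesis using LS_cmp[OF assms(1) \<open>0 < s\<close>, of "d mod m"] sd assms by auto
qed

lemma pow_inf_take:
  "0 < m \<Longrightarrow> m \<le> length y \<Longrightarrow> pow_inf (take m y) i = y!(i mod m)"
  unfolding pow_inf_def by (simp add: min_def)

lemma lemD:
  fixes y :: "'a::linorder list"
  assumes "lyndon y" "0 < a" "0 < b" "a \<le> length y" "b \<le> length y" "d < length y"
    "pon y a d" "y!d \<noteq> y!(d mod a)" "pon y b (Suc d)"
  shows "inf_lexless (pow_inf (take a y)) (pow_inf (take b y))"
  unfolding inf_lexless_def
proof (intro exI[of _ d] conjI allI impI)
  fix i assume "i < d"
  thus "pow_inf (take a y) i = pow_inf (take b y) i"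
    using assms by (simp add: pow_inf_take pon_def)
next
  have "y!(d mod a) < y!d" using D0 assms by blast
  moreover have "y!d = y!(d mod b)" using assms(9) unfolding pon_def by simp
  ultimately show "pow_inf (take a y) d < pow_inf (take b y) d"
    using assms by (simp add: pow_inf_take)
qed

lemma inf_lexless_asym:
  "inf_lexless f g \<Longrightarrow> inf_lexless g f \<Longrightarrow> False"
proof -
  assume "inf_lexless f g" "inf_lexless g f"
  then obtain k1 k2 where a: "\<forall>i<k1. f i = g i" "f k1 < g k1" and b: "\<forall>i<k2. g i = f i" "g k2 < f k2"
    unfolding inf_lexless_def by blast
  consider "k1 < k2" | "k1 = k2" | "k2 < k1" by arith
  thus False using a b by cases (auto dest: spec[of _ k1] spec[of _ k2])
qed

lemma inf_lexless_irrefl: "inf_lexless f f \<Longrightarrow> False"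
  unfolding inf_lexless_def by auto

lemma inf_prec_asym: "inf_prec u v \<Longrightarrow> inf_prec v u \<Longrightarrow> False"
  unfolding inf_prec_def using inf_lexless_asym inf_lexless_irrefl by fastforce

lemma inf_prec_irrefl: "inf_prec u u \<Longrightarrow> False"
  unfolding inf_prec_def using inf_lexless_irrefl by fastforce

lemma lemW:
  fixes y :: "'a::linorder list"
  assumes "lyndon y" "0 < B" "B < A" "A \<le> j" "j \<le> length y" "pon y B j"
  shows "inf_prec (take A y) (take B y)"
proof -
  define X where "X i = y!(i mod B)" for i
  define Z where "Z i = y!(i mod A)" for i
  define e where "e = A - B"
  have e0: "0 < e" and Ae: "A = B + e" using assms unfolding e_def by auto
  have XZ: "pow_inf (take A y) = Z" "pow_inf (take B y) = X"
    using assms by (auto simp: pow_inf_take X_def Z_def)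
  have Xy: "X i = y!i" if "i < j" for i using assms(6) that unfolding pon_def X_def by simp
  have Zy: "Z i = y!i" if "i < A" for i using that unfolding Z_def by simp
  have ZA: "Z i = Z (i - A)" if "A \<le> i" for i using that unfolding Z_def by (simp add: le_mod_geq)
  have XB: "X i = X (i - B)" if "B \<le> i" for i using that unfolding X_def by (simp add: le_mod_geq)
  show ?thesis
  proof (cases "\<exists>d<j. y!d \<noteq> y!(d mod e)")
    case True
    define d where "d = (LEAST d. d < j \<and> y!d \<noteq> y!(d mod e))"
    have d: "d < j" "y!d \<noteq> y!(d mod e)" using LeastI_ex[OF True] unfolding d_def by auto
    have pe: "pon y e d" unfolding pon_def
    proof (intro allI impI)
      fix i assume "i < d"
      thus "y!i = y!(i mod e)" using not_less_Least[of i "\<lambda>d. d < j \<and> y!d \<noteq> y!(d mod e)"] d(1)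
        unfolding d_def[symmetric] by auto
    qed
    have ed: "e \<le> d" using d(2) by (cases "d < e") auto
    have claim: "\<forall>i<B+d. Z i = X i"
    proof (intro allI impI)
      fix i show "i < B + d \<Longrightarrow> Z i = X i"
      proof (induction i rule: less_induct)
        case (less i)
        show ?case
        proof (cases "i < A")
          case True thus ?thesis using Zy Xy assms(4) by simp
        next
          case False
          have "Z i = Z (i - A)" using ZA False by simp
          also have "\<dots> = X (i - A)" using less.IH[of "i - A"] less.prems False assms by simp
          also have "\<dots> = y!(i - A)" using Xy False assms less.prems d by simp
          also have "\<dots> = y!(i - B)"
          proof -
            have ib: "i - B = (i - A) + e" using False Ae by simp
            have "i - B < d" using less.prems False Ae by arith
            hence "i - A < d" using ib by simp
            show ?thesis using pon_eq[OF pe \<open>i - A < d\<close> \<open>i - B < d\<close>] ib by simp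
          qed
          also have "\<dots> = X (i - B)" using Xy less.prems d False assms by simp
          also have "\<dots> = X i" using XB False assms by simp
          finally show ?thesis .
        qed
      qed
    qed
    let ?i0 = "B + d"
    have "Z ?i0 = Z (?i0 - A)" using ZA Ae ed by simp
    also have "\<dots> = X (?i0 - A)" using claim Ae ed e0 by simp
    also have "\<dots> = y!(d - e)" using Xy Ae d by simp
    also have "\<dots> = y!(d mod e)"
    proof -
      have "d mod e < e" using e0 by simp
      hence "d mod e < d" using ed by simp
      moreover have "d - e < d" using e0 ed by simp
      moreover have "(d - e) mod e = d mod e" using ed by (simp add: le_mod_geq)
      ultimately show ?thesis using pon_eq[OF pe, of "d - e" "d mod e"] by simp
    qed
    finally have z0: "Z ?i0 = y!(d mod e)" .
    have x0: "X ?i0 = y!d" using XB[of ?i0] Xy d by simp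
    have "y!(d mod e) < y!d" using D0[OF assms(1) e0 _ pe d(2)] d assms by simp
    hence "inf_lexless Z X" unfolding inf_lexless_def using claim z0 x0 by (intro exI[of _ ?i0]) auto
    thus ?thesis unfolding inf_prec_def XZ by simp
  next
    case False
    hence pe: "pon y e j" unfolding pon_def by auto
    have Xp: "X (t + e) = X t" for t
    proof (induction t rule: less_induct)
      case (less t)
      show ?case
      proof (cases "t + e < j")
        case True
        thus ?thesis using Xy pe pon_eq[OF pe, of "t+e" t] by simp
      next
        case False
        hence "B \<le> t" using Ae assms by simp
        have "X (t + e) = X (t + e - B)" using XB \<open>B \<le> t\<close> by simp
        also have "t + e - B = (t - B) + e" using \<open>B \<le> t\<close> by simp
        also have "X \<dots> = X (t - B)" using less.IH[of "t - B"] assms \<open>B \<le> t\<close> by simp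
        also have "\<dots> = X t" using XB \<open>B \<le> t\<close> by simp
        finally show ?thesis .
      qed
    qed
    have ZX: "Z i = X i" for i
    proof (induction i rule: less_induct)
      case (less i)
      show ?case
      proof (cases "i < A")
        case True thus ?thesis using Zy Xy assms(4) by simp
      next
        case False
        have "Z i = Z (i - A)" using ZA False by simp
        also have "\<dots> = X (i - A)" using less.IH[of "i - A"] False assms by simp
        also have "\<dots> = X (i - A + e)" using Xp by simp
        also have "i - A + e = i - B" using False Ae by simp
        also have "X (i - B) = X i" using XB False Ae by simp
        finally show ?thesis .
      qed
    qed
    hence "Z = X" by auto
    thus ?thesis unfolding inf_prec_def XZ using assms by simp
  qed
qed



definition fac :: "'a list \<Rightarrow> nat \<Rightarrow> nat \<Rightarrow> 'a list" where
  "fac y i L = take L (drop i y)"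

lemma fac_app: "fac y i a @ fac y (i + a) b = fac y i (a + b)"
  unfolding fac_def by (simp add: take_add add.commute)

lemma fac_len: "i + L \<le> length y \<Longrightarrow> length (fac y i L) = L"
  unfolding fac_def by simp

lemma fac_nth: "t < L \<Longrightarrow> i + L \<le> length y \<Longrightarrow> fac y i L ! t = y!(i+t)"
  unfolding fac_def by simp

lemma fac_drop: "drop c (fac y i L) = fac y (i + c) (L - c)"
  unfolding fac_def by (simp add: drop_take add.commute)

lemma fac_take: "c \<le> L \<Longrightarrow> take c (fac y i L) = fac y i c"
  unfolding fac_def by (simp add: min_def)

lemma fac_zero: "fac y 0 L = take L y"
  unfolding fac_def by simp

lemma fac_one: "i < length y \<Longrightarrow> fac y i 1 = [y!i]"
  unfolding fac_def by (simp add: take_Suc_conv_app_nth)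

lemma fac_eqI:
  assumes "i + L \<le> length y" "i' + L \<le> length y" "\<forall>t<L. y!(i+t) = y!(i'+t)"
  shows "fac y i L = fac y i' L"
  using assms by (intro nth_equalityI) (auto simp: fac_len fac_nth)

definition lam :: "'a::linorder list \<Rightarrow> nat \<Rightarrow> nat" where
  "lam y p = (GREATEST L. 0 < L \<and> L \<le> Suc p \<and> lyndon (fac y (Suc p - L) L))"

definition sig :: "'a::linorder list \<Rightarrow> nat \<Rightarrow> nat" where
  "sig y p = Suc p - lam y p"

lemma lam_props:
  assumes "p < length y"
  shows "0 < lam y p \<and> lam y p \<le> Suc p \<and> lyndon (fac y (Suc p - lam y p) (lam y p))"
proof -
  have "fac y (Suc p - 1) 1 = [y!p]" using fac_one[of p y] assms by simp
  hence "lyndon (fac y (Suc p - 1) 1)" by (simp add: lyndon_single)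
  hence ex: "0 < (1::nat) \<and> 1 \<le> Suc p \<and> lyndon (fac y (Suc p - 1) 1)" by simp
  show ?thesis unfolding lam_def
    by (rule GreatestI_nat[where b = "Suc p" and P = "\<lambda>L. 0 < L \<and> L \<le> Suc p \<and> lyndon (fac y (Suc p - L) L)", OF ex]) auto
qed

lemma lam_max:
  assumes "p < length y" "lam y p < L" "L \<le> Suc p"
  shows "\<not> lyndon (fac y (Suc p - L) L)"
proof
  assume "lyndon (fac y (Suc p - L) L)"
  hence "L \<le> lam y p" unfolding lam_def
    using assms by (intro Greatest_le_nat[where b = "Suc p"]) auto
  thus False using assms by simp
qed

lemma lam_eqI:
  assumes "0 < L" "L \<le> Suc p" "lyndon (fac y (Suc p - L) L)"
    "\<And>L'. L < L' \<Longrightarrow> L' \<le> Suc p \<Longrightarrow> \<not> lyndon (fac y (Suc p - L') L')"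
  shows "lam y p = L"
  unfolding lam_def
proof (rule Greatest_equality)
  show "0 < L \<and> L \<le> Suc p \<and> lyndon (fac y (Suc p - L) L)" using assms by simp
  fix L' assume "0 < L' \<and> L' \<le> Suc p \<and> lyndon (fac y (Suc p - L') L')"
  thus "L' \<le> L" using assms(4) by (metis not_le)
qed

lemma not_lexordp_iff:
  fixes a b :: "'a::linorder list"
  shows "\<not> ord_class.lexordp a b \<longleftrightarrow> ord_class.lexordp_eq b a"
  using lexordp_conv_lexordp_eq lexordp_eq_linear by blast

lemma pref_le:
  fixes y :: "'a::linorder list"
  assumes "lyndon y" "a + L \<le> length y"
  shows "ord_class.lexordp_eq (take L y) (fac y a L)"
proof (cases "a = 0")
  case True thus ?thesis by (simp add: fac_zero lexordp_eq_refl)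
next
  case False
  show ?thesis
  proof (cases "L = 0")
    case True thus ?thesis by simp
  next
    case False
    hence "a < length y" using assms by simp
    then obtain i where i: "a + i < length y" "\<forall>t<i. y!t = y!(a+t)" "y!i < y!(a+i)"
      using LS[OF assms(1)] \<open>a \<noteq> 0\<close> by blast
    show ?thesis
    proof (cases "i < L")
      case True
      have "ord_class.lexordp (take L y) (fac y a L)"
        using True i assms by (intro lexordp_idxI[of i]) (auto simp: fac_len fac_nth)
      thus ?thesis by (rule lexordp_into_lexordp_eq)
    next
      case False
      have "take L y = fac y a L" using False i assms
        by (intro nth_equalityI) (auto simp: fac_len fac_nth)
      thus ?thesis by (simp add: lexordp_eq_refl)
    qed
  qed
qed

lemma lemS:
  fixes y :: "'a::linorder list"
  assumes "lyndon y" "lyndon (fac y a L)" "a + L \<le> length y" "0 < c" "c < L"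
    "fac y (a + c) (L - c) = take (L - c) y"
  shows False
proof -
  have "ord_class.lexordp (fac y a L) (drop c (fac y a L))"
    using assms by (intro lyndon_suf) (auto simp: fac_len)
  hence h1: "ord_class.lexordp (fac y a L) (take (L - c) y)" using assms(6) by (simp add: fac_drop)
  have "take L y = take (L - c) y @ drop (L - c) (take L y)"
    using assms by (metis append_take_drop_id diff_le_self take_take min_def)
  hence "ord_class.lexordp_eq (take (L - c) y) (take L y)" by (metis lexordp_eq_pref)
  moreover have "ord_class.lexordp_eq (take L y) (fac y a L)" using assms by (intro pref_le)
  ultimately have "ord_class.lexordp_eq (take (L - c) y) (fac y a L)" by (rule lexordp_eq_trans)
  thus False using h1 lexordp_conv_lexordp_eq by blast
qed

lemma lemN:
  fixes y :: "'a::linorder list"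
  assumes "p < q" "q < length y" "sig y q \<le> p"
  shows "sig y q \<le> sig y p"
proof (rule ccontr)
  assume "\<not> sig y q \<le> sig y p"
  hence lt: "sig y p < sig y q" by simp
  define i where "i = sig y p"
  have lp: "0 < lam y p \<and> lam y p \<le> Suc p \<and> lyndon (fac y i (lam y p))"
    using lam_props[of p y] assms unfolding i_def sig_def by simp
  have lq: "0 < lam y q \<and> lam y q \<le> Suc q \<and> lyndon (fac y (sig y q) (lam y q))"
    using lam_props[of q y] assms unfolding sig_def by simp
  have ip: "i + lam y p = Suc p" using lp unfolding i_def sig_def by simp
  have sq: "sig y q + lam y q = Suc q" using lq unfolding sig_def by simp
  have sq2: "Suc q - sig y q = lam y q" using sq by simp
  define X where "X = fac y i (sig y q - i)"
  define T where "T = fac y (sig y q) (Suc p - sig y q)"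
  define Z where "Z = fac y (Suc p) (q - p)"
  have ip2: "Suc p - sig y p = lam y p" using ip i_def by simp
  have XT: "X @ T = fac y i (lam y p)"
    unfolding X_def T_def using fac_app[of y i "sig y q - i" "Suc p - sig y q"] lt ip assms i_def ip2
    by (simp add: add.commute)
  have TZ: "T @ Z = fac y (sig y q) (lam y q)"
    unfolding T_def Z_def using fac_app[of y "sig y q" "Suc p - sig y q" "q - p"] sq sq2 assms
    by simp
  have "X \<noteq> []" unfolding X_def using lt assms ip i_def by (simp add: fac_def)
  moreover have "T \<noteq> []" unfolding T_def using assms by (simp add: fac_def)
  ultimately have "lyndon (X @ T @ Z)" using lyndon_overlap[of X T Z] XT TZ lp lq by simp
  moreover have "X @ T @ Z = fac y i (Suc q - i)"
    unfolding X_def T_def Z_def using fac_app[of y i "sig y q - i" "(Suc p - sig y q) + (q - p)"]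
      fac_app[of y "sig y q" "Suc p - sig y q" "q - p"] lt assms ip i_def
    by (simp add: add.commute)
  ultimately have "lyndon (fac y (Suc q - (Suc q - i)) (Suc q - i))" using assms ip by simp
  moreover have "lam y q < Suc q - i" using lt sq i_def by simp
  ultimately show False using lam_max[of q y "Suc q - i"] assms by simp
qed



declare llt_at.simps[simp del]

lemma sig_lam: "p < length y \<Longrightarrow> sig y p + lam y p = Suc p"
  using lam_props[of p y] unfolding sig_def by simp

lemma sig_le: "p < length y \<Longrightarrow> sig y p \<le> p"
  using lam_props[of p y] unfolding sig_def by arith

lemma lam_pos: "p < length y \<Longrightarrow> 0 < lam y p"
  using lam_props[of p y] by simp

lemma lam_lyndon: "p < length y \<Longrightarrow> lyndon (fac y (sig y p) (lam y p))"
  using lam_props[of p y] unfolding sig_def by simp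

lemma lemG:
  fixes y :: "'a::linorder list"
  assumes "j < length y" "sig y j \<le> e" "e \<le> j"
  shows "\<not> ord_class.lexordp (fac y (sig y j) (lam y j)) (fac y (sig y e) (lam y e))"
  using assms(2,3)
proof (induction e rule: less_induct)
  case (less e)
  let ?x = "fac y (sig y j) (lam y j)"
  show ?case
  proof (cases "e = j")
    case True thus ?thesis by (simp add: lexordp_irreflexive')
  next
    case False
    hence ej: "e < j" using less.prems by simp
    have en: "e < length y" using ej assms by simp
    have se: "sig y j \<le> sig y e" using lemN[OF ej assms(1) less.prems(1)] .
    show ?thesis
    proof (cases "sig y e = sig y j")
      case True
      have "lam y e \<le> lam y j" using sig_lam[OF en] sig_lam[OF assms(1)] True ej by simp
      hence "take (lam y e) ?x = fac y (sig y j) (lam y e)" by (simp add: fac_take)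
      hence "?x = fac y (sig y e) (lam y e) @ drop (lam y e) ?x" using True
        by (metis append_take_drop_id)
      hence "ord_class.lexordp_eq (fac y (sig y e) (lam y e)) ?x" by (metis lexordp_eq_pref)
      thus ?thesis by (simp add: not_lexordp_iff)
    next
      case False
      hence sl: "sig y j < sig y e" using se by simp
      define e' where "e' = sig y e - 1"
      have e'1: "sig y j \<le> e'" "e' < e" using sl sig_le[OF en] unfolding e'_def by auto
      have e'n: "e' < length y" using e'1 en by simp
      have IH: "ord_class.lexordp_eq (fac y (sig y e') (lam y e')) ?x"
        using less.IH[OF e'1(2) e'1(1)] e'1 less.prems by (simp add: not_lexordp_iff)
      have "\<not> ord_class.lexordp (fac y (sig y e') (lam y e')) (fac y (sig y e) (lam y e))"
      proof
        assume h: "ord_class.lexordp (fac y (sig y e') (lam y e')) (fac y (sig y e) (lam y e))"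
        have "lyndon (fac y (sig y e') (lam y e') @ fac y (sig y e) (lam y e))"
          using lyndon_cat[OF lam_lyndon[OF e'n] lam_lyndon[OF en] h] .
        moreover have "sig y e' + lam y e' = sig y e" using sig_lam[OF e'n] sl unfolding e'_def by simp
        ultimately have "lyndon (fac y (sig y e') (lam y e' + lam y e))" by (metis fac_app)
        moreover have "Suc e - (lam y e' + lam y e) = sig y e'"
          using sig_lam[OF e'n] sig_lam[OF en] sl unfolding e'_def by simp
        ultimately have "lyndon (fac y (Suc e - (lam y e' + lam y e)) (lam y e' + lam y e))" by simp
        moreover have "lam y e < lam y e' + lam y e" using lam_pos[OF e'n] by simp
        moreover have "lam y e' + lam y e \<le> Suc e" using sig_lam[OF e'n] sig_lam[OF en] sl unfolding e'_def by simp
        ultimately show False using lam_max[OF en] by blast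
      qed
      hence "ord_class.lexordp_eq (fac y (sig y e) (lam y e)) (fac y (sig y e') (lam y e'))"
        by (simp add: not_lexordp_iff)
      hence "ord_class.lexordp_eq (fac y (sig y e) (lam y e)) ?x" using IH by (rule lexordp_eq_trans)
      thus ?thesis by (simp add: not_lexordp_iff)
    qed
  qed
qed

lemma u_lt_v:
  fixes y :: "'a::linorder list"
  assumes "j < length y" "sig y j < b" "b \<le> j"
  shows "ord_class.lexordp (fac y (sig y (b - 1)) (lam y (b - 1))) (fac y b (Suc j - b))"
proof (rule ccontr)
  let ?x = "fac y (sig y j) (lam y j)" and ?u = "fac y (sig y (b - 1)) (lam y (b - 1))"
    and ?v = "fac y b (Suc j - b)"
  assume "\<not> ord_class.lexordp ?u ?v"
  hence h1: "ord_class.lexordp_eq ?v ?u" by (simp add: not_lexordp_iff)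
  have "\<not> ord_class.lexordp ?x ?u" using lemG[OF assms(1), of "b - 1"] assms by simp
  hence "ord_class.lexordp_eq ?u ?x" by (simp add: not_lexordp_iff)
  with h1 have h2: "ord_class.lexordp_eq ?v ?x" by (rule lexordp_eq_trans)
  have sl: "sig y j + lam y j = Suc j" using sig_lam[OF assms(1)] .
  have "ord_class.lexordp ?x (drop (b - sig y j) ?x)"
    using lam_lyndon[OF assms(1)] assms sl by (intro lyndon_suf) (auto simp: fac_len)
  moreover have "drop (b - sig y j) ?x = fac y (sig y j + (b - sig y j)) (lam y j - (b - sig y j))"
    by (simp add: fac_drop)
  moreover have "sig y j + (b - sig y j) = b" "lam y j - (b - sig y j) = Suc j - b" using assms sl by arith+
  ultimately have "ord_class.lexordp ?x ?v" by simp
  moreover have "True" by simp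
  ultimately have "ord_class.lexordp ?x ?v" by simp
  thus False using h2 lexordp_conv_lexordp_eq by blast
qed

lemma llp_eq:
  assumes "0 < m" "m < length w" "lyndon (take m w)"
    "\<And>m'. m < m' \<Longrightarrow> m' < length w \<Longrightarrow> \<not> lyndon (take m' w)"
  shows "llp w = m"
  unfolding llp_def
proof (rule Greatest_equality)
  show "0 < m \<and> m < length w \<and> lyndon (take m w)" using assms by simp
  fix m' assume "0 < m' \<and> m' < length w \<and> lyndon (take m' w)"
  thus "m' \<le> m" using assms(4) by (metis not_le)
qed

lemma llt_node:
  assumes "0 < llp w" "llp w < length w"
  shows "llt_at w s = Node (llt_at (take (llp w) w) s) (llt_at (drop (llp w) w) (s + llp w))"
  using assms by (subst llt_at.simps) (simp add: Let_def)

lemma stepm: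
  fixes y :: "'a::linorder list"
  assumes "j < length y" "sig y j < b" "b \<le> j" "lyndon (fac y b (Suc j - b))"
    "\<forall>p. b \<le> p \<longrightarrow> p < j \<longrightarrow> b \<le> sig y p"
  shows "sig y j \<le> sig y (b - 1)" "sig y (b - 1) < b"
    "lyndon (fac y (sig y (b - 1)) (Suc j - sig y (b - 1)))"
    "llt_at (fac y (sig y (b - 1)) (Suc j - sig y (b - 1))) (sig y (b - 1)) =
       Node (llt_at (fac y (sig y (b - 1)) (lam y (b - 1))) (sig y (b - 1))) (llt_at (fac y b (Suc j - b)) b)"
    "\<forall>p. sig y (b - 1) \<le> p \<longrightarrow> p < j \<longrightarrow> sig y (b - 1) \<le> sig y p"
proof -
  define k where "k = b - 1"
  have kj: "k < j" "b = Suc k" using assms unfolding k_def by auto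
  have kn: "k < length y" using kj assms by simp
  have sk: "sig y k + lam y k = b" using sig_lam[OF kn] kj by simp
  have lk: "0 < lam y k" using lam_pos[OF kn] .
  show s1: "sig y j \<le> sig y (b - 1)" using lemN[OF kj(1) assms(1)] assms kj unfolding k_def by simp
  show s2: "sig y (b - 1) < b" using sk lk unfolding k_def by simp
  have eq1: "lam y k + (Suc j - b) = Suc j - sig y k" using sk assms by arith
  have uv: "fac y (sig y k) (lam y k) @ fac y b (Suc j - b) = fac y (sig y k) (Suc j - sig y k)"
    using fac_app[of y "sig y k" "lam y k" "Suc j - b"] sk eq1 by simp
  show s3: "lyndon (fac y (sig y (b - 1)) (Suc j - sig y (b - 1)))"
    using lyndon_cat[OF lam_lyndon[OF kn] assms(4) u_lt_v[OF assms(1-3), folded k_def]] uv unfolding k_def by simp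
  define w where "w = fac y (sig y k) (Suc j - sig y k)"
  have lw: "length w = Suc j - sig y k" unfolding w_def using assms s2 by (simp add: fac_len k_def)
  have llpw: "llp w = lam y k"
  proof (rule llp_eq)
    show "0 < lam y k" by (rule lk)
    show "lam y k < length w" using lw sk assms by simp
    show "lyndon (take (lam y k) w)" unfolding w_def using lam_lyndon[OF kn] sk assms
      by (simp add: fac_take)
    fix m' assume m': "lam y k < m'" "m' < length w"
    show "\<not> lyndon (take m' w)"
    proof
      assume "lyndon (take m' w)"
      hence ly: "lyndon (fac y (sig y k) m')" unfolding w_def using m' lw by (simp add: fac_take)
      define p where "p = sig y k + m' - 1"
      have p: "b \<le> p" "p < j" using m' sk lw unfolding p_def by auto
      have pn: "p < length y" using p assms by simp
      have "Suc p - m' = sig y k" using m' unfolding p_def by simp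
      hence "lyndon (fac y (Suc p - m') m')" using ly by simp
      have ms: "m' \<le> Suc p" unfolding p_def using m' by simp
      have "m' \<le> lam y p"
      proof (rule ccontr)
        assume "\<not> m' \<le> lam y p"
        hence "lam y p < m'" by simp
        thus False using lam_max[OF pn _ ms] \<open>lyndon (fac y (Suc p - m') m')\<close> by blast
      qed
      moreover have "sig y p = Suc p - lam y p" by (simp add: sig_def)
      ultimately have "sig y p \<le> sig y k" using \<open>Suc p - m' = sig y k\<close> by arith
      moreover have "b \<le> sig y p" using assms(5) p by blast
      ultimately show False using s2 unfolding k_def by simp
    qed
  qed
  have "llt_at w (sig y k) = Node (llt_at (take (llp w) w) (sig y k)) (llt_at (drop (llp w) w) (sig y k + llp w))"
    using llpw lk lw sk assms by (intro llt_node) auto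
  moreover have "take (llp w) w = fac y (sig y k) (lam y k)" unfolding llpw unfolding w_def using sk assms
    by (simp add: fac_take)
  moreover have "drop (llp w) w = fac y b (Suc j - b)" unfolding llpw unfolding w_def using sk assms
    by (simp add: fac_drop)
  ultimately show "llt_at (fac y (sig y (b - 1)) (Suc j - sig y (b - 1))) (sig y (b - 1)) =
       Node (llt_at (fac y (sig y (b - 1)) (lam y (b - 1))) (sig y (b - 1))) (llt_at (fac y b (Suc j - b)) b)"
    using llpw sk unfolding w_def k_def by (simp del: llt_at.simps)
  show "\<forall>p. sig y (b - 1) \<le> p \<longrightarrow> p < j \<longrightarrow> sig y (b - 1) \<le> sig y p"
  proof (intro allI impI)
    fix p assume p: "sig y (b - 1) \<le> p" "p < j"
    consider "b \<le> p" | "p = k" | "p < k" using kj by linarith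
    thus "sig y (b - 1) \<le> sig y p"
    proof cases
      case 1
      have "b \<le> sig y p" using assms(5) 1 p(2) by blast
      thus ?thesis using s2 by simp
    next
      case 2 thus ?thesis unfolding k_def by simp
    next
      case 3 thus ?thesis using lemN[OF 3 kn] p unfolding k_def by simp
    qed
  qed
qed



definition bump :: "'a list \<Rightarrow> nat \<Rightarrow> nat \<Rightarrow> bool" where
  "bump y b j \<longleftrightarrow> shp y b j \<and> y!j \<noteq> y!(j - b)"

lemma bump_base:
  fixes y :: "'a::linorder list"
  assumes "lyndon y" "j < length y" "sig y j < j"
  shows "bump y j j"
  unfolding bump_def shp_def
proof (intro conjI allI impI notI)
  fix t assume "j + t < j" thus "y!(j+t) = y!t" by simp
next
  assume eq: "y!j = y!(j - j)"
  have sl: "sig y j + lam y j = Suc j" using sig_lam[OF assms(2)] .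
  have ar: "sig y j + (j - sig y j) = j" "lam y j - (j - sig y j) = 1"
    using sl sig_le[OF assms(2)] by arith+
  have "fac y (sig y j + (j - sig y j)) (lam y j - (j - sig y j)) = fac y j 1"
    using ar by simp
  also have "\<dots> = [y!j]" using fac_one assms by simp
  also have "\<dots> = take 1 y" using eq assms by (cases y) auto
  finally have h: "fac y (sig y j + (j - sig y j)) (lam y j - (j - sig y j)) = take (lam y j - (j - sig y j)) y"
    using ar by simp
  have c1: "sig y j + lam y j \<le> length y" using sl assms by simp
  have c2: "0 < j - sig y j" "j - sig y j < lam y j" using sl assms by arith+
  show False by (rule lemS[OF assms(1) lam_lyndon[OF assms(2)] c1 c2 h])
qed

lemma bump_step:
  fixes y :: "'a::linorder list"
  assumes "lyndon y" "j < length y" "sig y j < s0" "s0 + L = b" "0 < L" "b \<le> j"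
    "bump y b j" "fac y s0 L = take L y"
  shows "bump y s0 j"
proof -
  have shb: "\<And>t. b + t < j \<Longrightarrow> y!(b+t) = y!t" using assms(7) unfolding bump_def shp_def by blast
  have pre: "\<And>t. t < L \<Longrightarrow> y!(s0+t) = y!t"
  proof -
    fix t assume t: "t < L"
    have "fac y s0 L ! t = y!(s0+t)" using t assms by (intro fac_nth) auto
    moreover have "take L y ! t = y!t" using t by simp
    ultimately show "y!(s0+t) = y!t" using assms(8) by simp
  qed
  have s0p: "0 < s0" using assms(3) by simp
  have A: "\<forall>t'. t' < j - b \<longrightarrow> y!(L + t') = y!t'"
  proof (rule ccontr)
    assume nA: "\<not> (\<forall>t'. t' < j - b \<longrightarrow> y!(L + t') = y!t')"
    obtain i0 where i0: "L + i0 < length y" "\<forall>t<i0. y!t = y!(L+t)" "y!i0 < y!(L+i0)"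
      using LS[OF assms(1) assms(5)] assms by fastforce
    have i0b: "i0 < j - b"
    proof (rule ccontr)
      assume "\<not> i0 < j - b"
      hence "\<forall>t'. t' < j - b \<longrightarrow> y!(L + t') = y!t'" using i0(2) by auto
      thus False using nA by blast
    qed
    have agr: "\<forall>t<L + i0. y!t = y!(s0+t)"
    proof (intro allI impI)
      fix t assume t: "t < L + i0"
      show "y!t = y!(s0+t)"
      proof (cases "t < L")
        case True thus ?thesis using pre by simp
      next
        case False
        have "s0 + t = b + (t - L)" using False assms(4) by arith
        hence "y!(s0+t) = y!(b + (t - L))" by simp
        also have "\<dots> = y!(t - L)"
        proof -
          have "b + (t - L) < j" using t i0b False by linarith
          thus ?thesis using shb by blast
        qed
        also have "\<dots> = y!(L + (t - L))" using i0(2) t False by simp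
        finally show ?thesis using False by simp
      qed
    qed
    have e1: "y!(s0 + (L + i0)) = y!i0"
    proof -
      have eq: "s0 + (L + i0) = b + i0" using assms(4) by simp
      have "b + i0 < j" using i0b by linarith
      thus ?thesis unfolding eq using shb by blast
    qed
    have "y!(L+i0) < y!(s0 + (L + i0))"
      using LS_cmp[OF assms(1) s0p, of "L + i0"] agr e1 i0 i0b assms by simp
    thus False using e1 i0(3) by simp
  qed
  have sh0: "shp y s0 j" unfolding shp_def
  proof (intro allI impI)
    fix t assume t: "s0 + t < j"
    show "y!(s0+t) = y!t"
    proof (cases "t < L")
      case True thus ?thesis using pre by simp
    next
      case False
      have "s0 + t = b + (t - L)" using False assms(4) by arith
      hence "y!(s0+t) = y!(b + (t - L))" by simp
      also have "\<dots> = y!(t - L)"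
      proof -
        have "b + (t - L) < j" using t False assms(4) by linarith
        thus ?thesis using shb by blast
      qed
      also have "\<dots> = y!(L + (t - L))"
      proof -
        have "t - L < j - b" using t False assms(4) by linarith
        thus ?thesis using A by simp
      qed
      finally show ?thesis using False by simp
    qed
  qed
  moreover have "y!j \<noteq> y!(j - s0)"
  proof
    assume eq: "y!j = y!(j - s0)"
    have sl: "sig y j + lam y j = Suc j" using sig_lam[OF assms(2)] .
    have f: "fac y s0 (Suc j - s0) = take (Suc j - s0) y"
    proof (intro nth_equalityI)
      show "length (fac y s0 (Suc j - s0)) = length (take (Suc j - s0) y)"
        using assms by (simp add: fac_len)
      fix t assume "t < length (fac y s0 (Suc j - s0))"
      hence t: "t < Suc j - s0" using assms by (simp add: fac_len)
      have "fac y s0 (Suc j - s0) ! t = y!(s0+t)" using t assms by (intro fac_nth) auto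
      moreover have "y!(s0+t) = y!t"
      proof (cases "s0 + t < j")
        case True thus ?thesis using sh0 unfolding shp_def by blast
      next
        case False hence "t = j - s0" using t by simp
        thus ?thesis using eq assms by simp
      qed
      ultimately show "fac y s0 (Suc j - s0) ! t = take (Suc j - s0) y ! t" using t assms by simp
    qed
    have h: "fac y (sig y j + (s0 - sig y j)) (lam y j - (s0 - sig y j)) = take (lam y j - (s0 - sig y j)) y"
    proof -
      have "sig y j + (s0 - sig y j) = s0" "lam y j - (s0 - sig y j) = Suc j - s0"
        using sl assms by arith+
      thus ?thesis using f by simp
    qed
    have c1: "sig y j + lam y j \<le> length y" using sl assms by simp
    have c2: "0 < s0 - sig y j" "s0 - sig y j < lam y j" using sl assms by arith+
    show False by (rule lemS[OF assms(1) lam_lyndon[OF assms(2)] c1 c2 h])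
  qed
  ultimately show ?thesis unfolding bump_def by simp
qed

lemma bump_pon:
  assumes "0 < b" "b \<le> j" "bump y b j"
  shows "pon y b j \<and> y!j \<noteq> y!(j mod b)"
proof -
  have p: "pon y b j" using assms pon_shp unfolding bump_def by blast
  have "j mod b < b" using assms by simp
  hence h1: "j mod b < j" using assms by linarith
  have h2: "j - b < j" using assms by simp
  have h3: "(j - b) mod b = j mod b" using assms by (simp add: le_mod_geq)
  have "y!(j - b) = y!(j mod b)" using pon_eq[OF p h2 h1] h3 by simp
  thus ?thesis using p assms unfolding bump_def by simp
qed

lemma duval:
  fixes y :: "'a::linorder list"
  assumes "lyndon y" "0 < q" "q \<le> j" "j < length y" "pon y q j" "y!j \<noteq> y!(j mod q)"
    "lyndon (take q y)"
  shows "lyndon (take (Suc j) y)"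
  unfolding lyndon_def lexless_lexordp
proof (intro conjI allI impI)
  show "take (Suc j) y \<noteq> []" using assms(4) by (cases y) auto
  fix s assume s: "0 < s \<and> s < length (take (Suc j) y)"
  hence s1: "0 < s" "s \<le> j" using assms by auto
  have dr: "drop s (take (Suc j) y) = fac y s (Suc j - s)" unfolding fac_def
    by (simp add: drop_take)
  have tk: "take (Suc j) y = take (Suc j - s) y @ fac y (Suc j - s) s"
    using fac_app[of y 0 "Suc j - s" s] s1 by (simp add: fac_zero)
  have ple: "ord_class.lexordp_eq (take (Suc j - s) y) (fac y s (Suc j - s))"
    using assms s1 by (intro pref_le) auto
  show "ord_class.lexordp (take (Suc j) y) (drop s (take (Suc j) y))"
  proof (cases "take (Suc j - s) y = fac y s (Suc j - s)")
    case False
    hence "ord_class.lexordp (take (Suc j - s) y) (fac y s (Suc j - s))"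
      using ple by (simp add: lexordp_eq_conv_lexord)
    hence "ord_class.lexordp (take (Suc j - s) y @ fac y (Suc j - s) s) (fac y s (Suc j - s) @ [])"
      using assms s1 by (intro lexordp_app_strict) (auto simp: fac_len)
    thus ?thesis using tk dr by simp
  next
    case True
    have sh: "shp y s (Suc j)" unfolding shp_def
    proof (intro allI impI)
      fix t assume t: "s + t < Suc j"
      have "fac y s (Suc j - s) ! t = y!(s+t)" using t assms by (intro fac_nth) auto
      moreover have "take (Suc j - s) y ! t = y!t" using t by simp
      ultimately show "y!(s+t) = y!t" using True by simp
    qed
    consider "s < q" | "s = q" | "q < s" by arith
    thus ?thesis
    proof cases
      case 1
      have "drop s (take q y) = take (length (take q y) - s) (take q y)"
      proof (intro nth_equalityI)
        show "length (drop s (take q y)) = length (take (length (take q y) - s) (take q y))"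
          using assms by simp
        fix t assume "t < length (drop s (take q y))"
        hence t: "s + t < q" using assms by simp
        hence "y!(s+t) = y!t" using sh assms unfolding shp_def by simp
        thus "drop s (take q y) ! t = take (length (take q y) - s) (take q y) ! t"
          using t assms by simp
      qed
      thus ?thesis using lyndon_unbordered[OF assms(7), of s] 1 s1 assms by simp
    next
      case 2
      have "q + (j - q) < Suc j \<longrightarrow> y!(q + (j - q)) = y!(j - q)"
        using sh unfolding shp_def 2 by (rule spec)
      moreover have qj: "q + (j - q) = j" using assms by simp
      ultimately have "y!j = y!(j - q)" by simp
      moreover have "y!(j - q) = y!(j mod q)"
      proof -
        have "j mod q < q" using assms by simp
        hence h1: "j mod q < j" using assms by linarith
        have h2: "j - q < j" using assms by simp
        have h3: "(j - q) mod q = j mod q" using assms by (simp add: le_mod_geq)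
        show ?thesis using pon_eq[OF assms(5) h2 h1] h3 by simp
      qed
      ultimately show ?thesis using assms by simp
    next
      case 3
      have "inf_prec (take s y) (take q y)"
        using lemW[OF assms(1,2) 3 s1(2)] assms by simp
      moreover have "pon y s (Suc j)" using sh pon_shp s1 by blast
      hence "inf_lexless (pow_inf (take q y)) (pow_inf (take s y))"
        using lemD[OF assms(1,2) s1(1)] assms s1 by simp
      hence "inf_prec (take q y) (take s y)" unfolding inf_prec_def by simp
      ultimately show ?thesis using inf_prec_asym by blast
    qed
  qed
qed

lemma lam_periodic:
  fixes y :: "'a::linorder list"
  assumes "lyndon y" "0 < q" "q \<le> j" "j < length y" "pon y q (Suc j)"
  shows "lam y j = lam y (j mod q) \<and>
         fac y (sig y j) (lam y j) = fac y (sig y (j mod q)) (lam y (j mod q))"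
proof -
  define r where "r = j mod q"
  define base where "base = j - r"
  have rq: "r < q" unfolding r_def using assms by simp
  have rj: "r \<le> j" unfolding r_def by simp
  have bdvd: "base mod q = 0" unfolding base_def r_def by (simp add: minus_mod_eq_mult_div)
  have bq: "q \<le> base"
  proof -
    have "base = q * (j div q)" unfolding base_def r_def by (simp add: minus_mod_eq_mult_div)
    moreover have "0 < j div q" using assms by (simp add: div_greater_zero_iff)
    ultimately show ?thesis by simp
  qed
  have rn: "r < length y" using rj assms by simp
  have tr: "\<And>t. t \<le> r \<Longrightarrow> y!(base + t) = y!t"
  proof -
    fix t assume t: "t \<le> r"
    have "base + t < Suc j" using t rj unfolding base_def by simp
    moreover have "t < Suc j" using t rj by simp
    moreover have "(base + t) mod q = t mod q" using bdvd by (simp add: mod_add_left_eq[symmetric])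
    ultimately show "y!(base + t) = y!t" by (rule pon_eq[OF assms(5)])
  qed
  have same: "\<And>L. L \<le> Suc r \<Longrightarrow> fac y (Suc j - L) L = fac y (Suc r - L) L"
  proof -
    fix L assume L: "L \<le> Suc r"
    have bs: "base + Suc r = Suc j" using rj unfolding base_def by simp
    have "Suc j - L = base + (Suc r - L)" using L rj unfolding base_def by simp
    moreover have "fac y (base + (Suc r - L)) L = fac y (Suc r - L) L"
    proof (rule fac_eqI)
      show "base + (Suc r - L) + L \<le> length y" using bs L assms by simp
      show "Suc r - L + L \<le> length y" using L rj assms by simp
      show "\<forall>t<L. y ! (base + (Suc r - L) + t) = y ! (Suc r - L + t)"
      proof (intro allI impI)
        fix t assume "t < L"
        hence "Suc r - L + t \<le> r" using L by simp
        thus "y ! (base + (Suc r - L) + t) = y ! (Suc r - L + t)" using tr by (simp add: add.assoc)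
      qed
    qed
    ultimately show "fac y (Suc j - L) L = fac y (Suc r - L) L" by simp
  qed
  have big: "\<And>L. Suc r < L \<Longrightarrow> L \<le> Suc j \<Longrightarrow> \<not> lyndon (fac y (Suc j - L) L)"
  proof
    fix L assume L: "Suc r < L" "L \<le> Suc j" and ly: "lyndon (fac y (Suc j - L) L)"
    have "fac y base (Suc r) = take (Suc r) y"
      using tr rj assms unfolding base_def by (intro nth_equalityI) (auto simp: fac_len fac_nth)
    moreover have "Suc j - L + (L - Suc r) = base" "L - (L - Suc r) = Suc r"
      using L rj unfolding base_def by auto
    ultimately have h: "fac y (Suc j - L + (L - Suc r)) (L - (L - Suc r)) = take (L - (L - Suc r)) y"
      by simp
    have c1: "Suc j - L + L \<le> length y" using L assms by simp
    have c2: "0 < L - Suc r" "L - Suc r < L" using L by auto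
    show False by (rule lemS[OF assms(1) ly c1 c2 h])
  qed
  have lr: "0 < lam y r \<and> lam y r \<le> Suc r \<and> lyndon (fac y (Suc r - lam y r) (lam y r))"
    using lam_props[OF rn] .
  have "lam y j = lam y r"
  proof (rule lam_eqI)
    show "0 < lam y r" using lr by simp
    show "lam y r \<le> Suc j" using lr rj by simp
    show "lyndon (fac y (Suc j - lam y r) (lam y r))" using lr same by simp
    fix L' assume L': "lam y r < L'" "L' \<le> Suc j"
    show "\<not> lyndon (fac y (Suc j - L') L')"
    proof (cases "L' \<le> Suc r")
      case True thus ?thesis using same lam_max[OF rn L'(1)] by simp
    next
      case False thus ?thesis using big L' by simp
    qed
  qed
  moreover have "fac y (sig y j) (lam y j) = fac y (sig y r) (lam y r)"
    using calculation same lr unfolding sig_def by simp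
  ultimately show ?thesis unfolding r_def by simp
qed



inductive rep_below :: "alg_state \<Rightarrow> nat \<Rightarrow> nat \<Rightarrow> nat \<Rightarrow> tree \<Rightarrow> bool" where
  rb_leaf: "q < n \<Longrightarrow> rep_below s n F q (Leaf q)"
| rb_node: "n \<le> q \<Longrightarrow> q < F \<Longrightarrow> rep_below s n F (lchild s q) t1 \<Longrightarrow> rep_below s n F (rchild s q) t2
    \<Longrightarrow> rep_below s n F q (Node t1 t2)"

lemma rb_represents: "rep_below s n F q t \<Longrightarrow> represents s n q t"
  by (induction rule: rep_below.induct) (auto intro: represents.intros)

lemma rb_agree:
  "rep_below s n F q t \<Longrightarrow> (\<forall>q'. n \<le> q' \<longrightarrow> q' < F \<longrightarrow> lchild s' q' = lchild s q' \<and> rchild s' q' = rchild s q')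
   \<Longrightarrow> rep_below s' n F q t"
  by (induction rule: rep_below.induct) (auto intro: rep_below.intros)

lemma rb_mono: "rep_below s n F q t \<Longrightarrow> F \<le> F' \<Longrightarrow> rep_below s n F' q t"
  by (induction rule: rep_below.induct) (auto intro: rep_below.intros)

fun nodes :: "alg_state \<Rightarrow> nat \<Rightarrow> tree \<Rightarrow> nat set" where
  "nodes s q (Leaf p) = {}"
| "nodes s q (Node t1 t2) = insert q (nodes s (lchild s q) t1 \<union> nodes s (rchild s q) t2)"

lemma nodes_agree:
  "rep_below s n F q t \<Longrightarrow> (\<forall>q'. n \<le> q' \<longrightarrow> q' < F \<longrightarrow> lchild s' q' = lchild s q' \<and> rchild s' q' = rchild s q')
   \<Longrightarrow> nodes s' q t = nodes s q t"
  by (induction rule: rep_below.induct) auto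

lemma represents_fun:
  "represents s n q t1 \<Longrightarrow> represents s n q t2 \<Longrightarrow> t1 = t2"
proof (induction arbitrary: t2 rule: represents.induct)
  case (leaf q n s)
  from leaf.prems show ?case by (cases rule: represents.cases) (use leaf.hyps in auto)
next
  case (node n q s t1 t2 t2')
  from node.prems show ?case
  proof (cases rule: represents.cases)
    case leaf thus ?thesis using node.hyps(1) by simp
  next
    case (node u1 u2)
    have "t1 = u1" using node.IH(1) node(3) by blast
    moreover have "t2 = u2" using node.IH(2) node(4) by blast
    ultimately show ?thesis using node(1) by simp
  qed
qed

lemma reach_trans: "reach s n b c \<Longrightarrow> reach s n a b \<Longrightarrow> reach s n a c"
  by (induction rule: reach.induct) (auto intro: reach.intros)

lemma reach_sub:
  "reach s n r q' \<Longrightarrow> represents s n r t \<Longrightarrow> \<exists>t'. represents s n q' t' \<and> nodes s q' t' \<subseteq> nodes s r t"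
proof (induction rule: reach.induct)
  case (self s n r) thus ?case by blast
next
  case (left s n r q)
  then obtain t' where t': "represents s n q t'" "nodes s q t' \<subseteq> nodes s r t" by blast
  from t'(1) obtain t1 t2 where "t' = Node t1 t2" "represents s n (lchild s q) t1" "represents s n (rchild s q) t2"
    using left.hyps(2) by (cases rule: represents.cases) auto
  thus ?case using t'(2) by (intro exI[of _ t1]) auto
next
  case (right s n r q)
  then obtain t' where t': "represents s n q t'" "nodes s q t' \<subseteq> nodes s r t" by blast
  from t'(1) obtain t1 t2 where "t' = Node t1 t2" "represents s n (lchild s q) t1" "represents s n (rchild s q) t2"
    using right.hyps(2) by (cases rule: represents.cases) auto
  thus ?case using t'(2) by (intro exI[of _ t2]) auto
qed

lemma nodes_reach:
  "represents s n q t \<Longrightarrow> q' \<in> nodes s q t \<Longrightarrow> reach s n q q' \<and> n \<le> q'"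
proof (induction rule: represents.induct)
  case (leaf q n s) thus ?case by simp
next
  case (node n q s t1 t2)
  have l: "reach s n q (lchild s q)" "reach s n q (rchild s q)"
    using node.hyps(1) by (auto intro: reach.intros)
  from node.prems consider "q' = q" | "q' \<in> nodes s (lchild s q) t1" | "q' \<in> nodes s (rchild s q) t2" by auto
  thus ?case
  proof cases
    case 1 thus ?thesis using node.hyps(1) by (auto intro: reach.intros)
  next
    case 2 thus ?thesis using node.IH(1) l reach_trans by blast
  next
    case 3 thus ?thesis using node.IH(2) l reach_trans by blast
  qed
qed

lemma reach_nodes:
  assumes "represents s n q t"
  shows "{q'. reach s n q q' \<and> n \<le> q'} = nodes s q t"
proof
  show "{q'. reach s n q q' \<and> n \<le> q'} \<subseteq> nodes s q t"
  proof
    fix q' assume "q' \<in> {q'. reach s n q q' \<and> n \<le> q'}"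
    hence h: "reach s n q q'" "n \<le> q'" by auto
    then obtain t' where t': "represents s n q' t'" "nodes s q' t' \<subseteq> nodes s q t"
      using reach_sub assms by blast
    from t'(1) obtain t1 t2 where "t' = Node t1 t2"
      using h(2) by (cases rule: represents.cases) auto
    thus "q' \<in> nodes s q t" using t'(2) by auto
  qed
  show "nodes s q t \<subseteq> {q'. reach s n q q' \<and> n \<le> q'}"
    using nodes_reach[OF assms] by blast
qed

lemma llp_range:
  assumes "2 \<le> length w"
  shows "0 < llp w \<and> llp w < length w"
proof -
  have "take 1 w = [w!0]" using assms by (cases w) auto
  hence ex: "0 < (1::nat) \<and> 1 < length w \<and> lyndon (take 1 w)" using assms by (simp add: lyndon_single)
  have "(\<lambda>m. 0 < m \<and> m < length w \<and> lyndon (take m w)) (GREATEST m. 0 < m \<and> m < length w \<and> lyndon (take m w))"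
    by (rule GreatestI_nat[where P = "\<lambda>m. 0 < m \<and> m < length w \<and> lyndon (take m w)" and b = "length w", OF ex]) auto
  thus ?thesis unfolding llp_def by simp
qed

lemma rightmost_llt: "w \<noteq> [] \<Longrightarrow> rightmost_leaf (llt_at w s) = s + length w - 1"
proof (induction w s rule: llt_at.induct)
  case (1 w s)
  show ?case
  proof (cases "length w \<le> 1")
    case True thus ?thesis using 1 by (subst llt_at.simps) (cases w, auto)
  next
    case False
    hence "2 \<le> length w" by simp
    hence r: "0 < llp w \<and> llp w < length w" by (rule llp_range)
    have "llt_at w s = Node (llt_at (take (llp w) w) s) (llt_at (drop (llp w) w) (s + llp w))"
      using r by (intro llt_node) auto
    moreover have "rightmost_leaf (llt_at (drop (llp w) w) (s + llp w)) = s + llp w + length (drop (llp w) w) - 1"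
      using 1(2)[OF False refl] r by auto
    ultimately show ?thesis using r by simp
  qed
qed



inductive in_chain :: "'a::linorder list \<Rightarrow> nat \<Rightarrow> nat \<Rightarrow> bool" for y where
  ic_refl: "in_chain y p p"
| ic_step: "in_chain y p q \<Longrightarrow> 0 < sig y q \<Longrightarrow> in_chain y p (sig y q - 1)"

definition chainS :: "'a::linorder list \<Rightarrow> nat \<Rightarrow> nat set" where
  "chainS y p = {q. in_chain y p q}"

definition stk :: "'a::linorder list \<Rightarrow> nat \<Rightarrow> nat set" where
  "stk y b = (if 0 < b then chainS y (b - 1) else {})"

lemma in_chain_trans: "in_chain y b c \<Longrightarrow> in_chain y a b \<Longrightarrow> in_chain y a c"
proof (induction rule: in_chain.induct)
  case ic_refl thus ?case .
next
  case (ic_step p' q') thus ?case by (blast intro: in_chain.ic_step)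
qed

lemma chain_unfold: "chainS y p = insert p (stk y (sig y p))"
proof
  show "chainS y p \<subseteq> insert p (stk y (sig y p))"
  proof
    fix q assume "q \<in> chainS y p"
    hence "in_chain y p q" by (simp add: chainS_def)
    hence "q = p \<or> (0 < sig y p \<and> in_chain y (sig y p - 1) q)"
    proof (induction rule: in_chain.induct)
      case ic_refl thus ?case by simp
    next
      case (ic_step p' q')
      from ic_step.IH show ?case
      proof
        assume "q' = p'" thus ?thesis using ic_step.hyps(2) by (blast intro: in_chain.ic_refl)
      next
        assume "0 < sig y p' \<and> in_chain y (sig y p' - 1) q'"
        thus ?thesis using ic_step.hyps(2) by (blast intro: in_chain.ic_step)
      qed
    qed
    thus "q \<in> insert p (stk y (sig y p))" by (auto simp: stk_def chainS_def)
  qed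
  show "insert p (stk y (sig y p)) \<subseteq> chainS y p"
  proof
    fix q assume "q \<in> insert p (stk y (sig y p))"
    moreover have "in_chain y p (sig y p - 1)" if "0 < sig y p"
      using that by (metis ic_refl ic_step)
    ultimately show "q \<in> chainS y p"
      by (auto simp: stk_def chainS_def split: if_splits intro: ic_refl in_chain_trans)
  qed
qed

lemma chain_le: "in_chain y p q \<Longrightarrow> p < length y \<Longrightarrow> q \<le> p"
proof (induction rule: in_chain.induct)
  case ic_refl thus ?case by simp
next
  case (ic_step p' q')
  hence "q' \<le> p'" by simp
  hence "q' < length y" using ic_step.prems by simp
  hence "sig y q' \<le> q'" by (rule sig_le)
  thus ?case using \<open>q' \<le> p'\<close> by simp
qed

lemma stk_lt: "p \<in> stk y b \<Longrightarrow> b \<le> length y \<Longrightarrow> p < b"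
proof -
  assume h: "p \<in> stk y b" "b \<le> length y"
  hence b: "0 < b" "in_chain y (b - 1) p" unfolding stk_def chainS_def by (auto split: if_splits)
  hence "p \<le> b - 1" using chain_le[of y "b - 1" p] h by simp
  thus "p < b" using b by simp
qed

definition Tr :: "'a::linorder list \<Rightarrow> nat \<Rightarrow> tree" where
  "Tr y p = llt_at (fac y (sig y p) (lam y p)) (sig y p)"

lemma rightmost_Tr: "p < length y \<Longrightarrow> rightmost_leaf (Tr y p) = p"
proof -
  assume p: "p < length y"
  have sl: "sig y p + lam y p = Suc p" using sig_lam[OF p] .
  have "fac y (sig y p) (lam y p) \<noteq> []" using sl p lam_pos[OF p] by (simp add: fac_def)
  hence "rightmost_leaf (Tr y p) = sig y p + length (fac y (sig y p) (lam y p)) - 1"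
    unfolding Tr_def by (rule rightmost_llt)
  thus ?thesis using sl p by (simp add: fac_len)
qed

definition ginv :: "'a::linorder list \<Rightarrow> alg_state \<Rightarrow> (nat \<Rightarrow> nat) \<Rightarrow> (nat \<Rightarrow> nat) \<Rightarrow> bool" where
  "ginv y s Bf Jf \<longleftrightarrow>
    (\<forall>c<length (created s). 0 < Bf c \<and> Bf c \<le> Jf c \<and> Jf c < length y \<and> pon y (Bf c) (Jf c) \<and>
        y!(Jf c) \<noteq> y!(Jf c mod Bf c) \<and>
        (\<exists>t. rep_below s (length y) (fresh s) (lchild s (length y + c)) t \<and> rightmost_leaf t = Bf c - 1)) \<and>
    (\<forall>c c'. c < c' \<longrightarrow> c' < length (created s) \<longrightarrow> Jf c < Jf c' \<or> (Jf c = Jf c' \<and> Bf c' < Bf c))"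

definition iinv :: "'a::linorder list \<Rightarrow> nat \<Rightarrow> alg_state \<Rightarrow> alg_state \<Rightarrow> nat \<Rightarrow> nat \<Rightarrow> bool" where
  "iinv y j s0 s l k \<longleftrightarrow>
    0 < l \<and> l \<le> lam y j \<and> k = j - l \<and>
    lyns s = lyns s0 \<and> per s = per s0 \<and> idx s = idx s0 \<and>
    length y \<le> fresh s \<and> fresh s = length y + length (created s) \<and>
    (\<forall>c<length (created s). created s ! c = length y + c) \<and>
    (\<forall>p<j. rep_below s (length y) (fresh s) (root s p) (Tr y p)) \<and>
    lyndon (fac y (Suc j - l) l) \<and>
    rep_below s (length y) (fresh s) (root s j) (llt_at (fac y (Suc j - l) l) (Suc j - l)) \<and>
    (\<forall>p. Suc j - l \<le> p \<longrightarrow> p < j \<longrightarrow> Suc j - l \<le> sig y p) \<and>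
    (sig y j < Suc j - l \<longrightarrow> bump y (Suc j - l) j) \<and>
    set (created s) = nodes s (root s j) (llt_at (fac y (Suc j - l) l) (Suc j - l)) \<union>
                      (\<Union>p\<in>stk y (Suc j - l). nodes s (root s p) (Tr y p)) \<and>
    (\<exists>Bf Jf. ginv y s Bf Jf \<and> (\<forall>c<length (created s). Jf c \<le> j \<and> (Jf c = j \<longrightarrow> Suc j - l < Bf c)) \<and>
       Bf ` {..<length (created s)} = Suc ` ({0..j} - insert j (stk y (Suc j - l))))"



lemma istep:
  fixes y :: "'a::linorder list"
  assumes y: "lyndon y" and jn: "j < length y" and j0: "0 < j"
    and PL: "\<forall>p<j. fac y (sig y p) (lam y p) = take (lam y p) y"
    and LY: "\<forall>p\<le>j. lyns s0 p = lam y p"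
    and inv: "iinv y j s0 s l k" and cond: "l < lyns s j"
  shows "case inner_step j (s, l, k) of (s', l', k') \<Rightarrow> iinv y j s0 s' l' k'"
proof -
  define n where "n = length y"
  define b where "b = Suc j - l"
  have I: "0 < l" "l \<le> lam y j" "k = j - l" "lyns s = lyns s0" "per s = per s0" "idx s = idx s0"
    "n \<le> fresh s" "fresh s = n + length (created s)" "\<forall>c<length (created s). created s ! c = n + c"
    "\<forall>p<j. rep_below s n (fresh s) (root s p) (Tr y p)" "lyndon (fac y b l)"
    "rep_below s n (fresh s) (root s j) (llt_at (fac y b l) b)"
    "\<forall>p. b \<le> p \<longrightarrow> p < j \<longrightarrow> b \<le> sig y p" "sig y j < b \<longrightarrow> bump y b j"
    "set (created s) = nodes s (root s j) (llt_at (fac y b l) b) \<union> (\<Union>p\<in>stk y b. nodes s (root s p) (Tr y p))"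
    "\<exists>Bf Jf. ginv y s Bf Jf \<and> (\<forall>c<length (created s). Jf c \<le> j \<and> (Jf c = j \<longrightarrow> b < Bf c)) \<and>
       Bf ` {..<length (created s)} = Suc ` ({0..j} - insert j (stk y b))"
    using inv unfolding iinv_def b_def n_def by blast+
  have lj: "l < lam y j" using cond I LY by simp
  have sl: "sig y j + lam y j = Suc j" using sig_lam[OF jn] .
  have bj: "sig y j < b" "b \<le> j" "0 < b" using lj I sl unfolding b_def by auto
  have lb: "l = Suc j - b" using I lj sl unfolding b_def by simp
  have kb: "k = b - 1" using I lj unfolding b_def by simp
  have kj: "k < j" using kb bj by simp
  have kn: "k < length y" using kj jn by simp
  have lk: "lyns s k = lam y k" using I LY kj by simp
  have skl: "sig y k + lam y k = b" using sig_lam[OF kn] kb bj by simp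
  have lk0: "0 < lam y k" using lam_pos[OF kn] .
  define q where "q = fresh s"
  define s' where "s' = s\<lparr>lchild := (lchild s)(q := root s k), rchild := (rchild s)(q := root s j),
      root := (root s)(j := q), fresh := Suc q, created := created s @ [q]\<rparr>"
  have step: "inner_step j (s, l, k) = (s', l + lam y k, k - lam y k)"
    unfolding inner_step_def s'_def q_def using lk by (simp add: Let_def)
  define b' where "b' = sig y k"
  have lyv: "lyndon (fac y b (Suc j - b))" using I lb by simp
  have J4: "\<forall>p. b \<le> p \<longrightarrow> p < j \<longrightarrow> b \<le> sig y p" using I by simp
  note SM = stepm[OF jn bj(1) bj(2) lyv J4, folded kb, folded b'_def]
  have l': "Suc j - (l + lam y k) = b'" using skl lb bj unfolding b'_def by simp
  have l'2: "l + lam y k = Suc j - b'" using skl lb bj unfolding b'_def by simp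
  have k': "k - lam y k = j - (l + lam y k)" using kb lb bj by arith
  have nq: "n \<le> q" using I unfolding q_def by simp
  have agr: "\<forall>q'. n \<le> q' \<longrightarrow> q' < fresh s \<longrightarrow> lchild s' q' = lchild s q' \<and> rchild s' q' = rchild s q'"
    unfolding s'_def q_def by simp
  have fr: "fresh s' = Suc (fresh s)" unfolding s'_def q_def by simp
  have stab: "rep_below s' n (fresh s') r t" if "rep_below s n (fresh s) r t" for r t
    using rb_mono[OF rb_agree[OF that agr]] fr by simp
  have nstab: "nodes s' r t = nodes s r t" if "rep_below s n (fresh s) r t" for r t
    using nodes_agree[OF that agr] .
  have rootp: "root s' p = root s p" if "p \<noteq> j" for p using that unfolding s'_def by simp
  have repk: "rep_below s n (fresh s) (root s k) (Tr y k)" using I kj by simp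
  have repv: "rep_below s n (fresh s) (root s j) (llt_at (fac y b l) b)" using I by simp
  have newtree: "rep_below s' n (fresh s') q (Node (Tr y k) (llt_at (fac y b l) b))"
  proof (rule rb_node)
    show "n \<le> q" by (rule nq)
    show "q < fresh s'" using fr unfolding q_def by simp
    show "rep_below s' n (fresh s') (lchild s' q) (Tr y k)" using stab[OF repk] unfolding s'_def by simp
    show "rep_below s' n (fresh s') (rchild s' q) (llt_at (fac y b l) b)" using stab[OF repv] unfolding s'_def by simp
  qed
  have treeeq: "llt_at (fac y b' (Suc j - b')) b' = Node (Tr y k) (llt_at (fac y b l) b)"
    using SM(4) lb unfolding Tr_def b'_def by simp
  have stkb: "stk y b = insert k (stk y b')"
  proof -
    have "stk y b = chainS y k" unfolding stk_def[of y b] using bj kb by simp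
    thus ?thesis using chain_unfold[of y k] unfolding b'_def by simp
  qed
  have stkb'_lt: "p < b'" if "p \<in> stk y b'" for p
    using stk_lt[OF that] SM(2) bj jn by simp
  have k_notin: "k \<notin> stk y b'" using stkb'_lt SM(2) kb bj by fastforce
  have nodes_new: "nodes s' (root s' j) (llt_at (fac y b' (Suc j - b')) b') =
      insert q (nodes s (root s k) (Tr y k) \<union> nodes s (root s j) (llt_at (fac y b l) b))"
  proof -
    have "root s' j = q" unfolding s'_def by simp
    moreover have "lchild s' q = root s k" "rchild s' q = root s j" unfolding s'_def by simp_all
    ultimately show ?thesis using treeeq nstab[OF repk] nstab[OF repv] by simp
  qed
  have nodes_stk: "(\<Union>p\<in>stk y b'. nodes s' (root s' p) (Tr y p)) = (\<Union>p\<in>stk y b'. nodes s (root s p) (Tr y p))"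
  proof (rule SUP_cong[OF refl])
    fix p assume "p \<in> stk y b'"
    hence pj: "p < j" using stkb'_lt SM(2) bj by fastforce
    hence "root s' p = root s p" using rootp by simp
    thus "nodes s' (root s' p) (Tr y p) = nodes s (root s p) (Tr y p)"
      using nstab I pj by simp
  qed
  have created': "created s' = created s @ [q]" unfolding s'_def by simp
  have setc: "set (created s') = nodes s' (root s' j) (llt_at (fac y b' (Suc j - b')) b') \<union>
      (\<Union>p\<in>stk y b'. nodes s' (root s' p) (Tr y p))"
  proof -
    have "set (created s) = nodes s (root s j) (llt_at (fac y b l) b) \<union> (\<Union>p\<in>stk y b. nodes s (root s p) (Tr y p))"
      using I by simp
    thus ?thesis unfolding created' nodes_new nodes_stk stkb by auto
  qed
  obtain Bf Jf where G: "ginv y s Bf Jf" "\<forall>c<length (created s). Jf c \<le> j \<and> (Jf c = j \<longrightarrow> b < Bf c)"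
      "Bf ` {..<length (created s)} = Suc ` ({0..j} - insert j (stk y b))"
    using I by blast
  define len where "len = length (created s)"
  define Bf' where "Bf' = Bf(len := b)"
  define Jf' where "Jf' = Jf(len := j)"
  have lenq: "q = n + len" using I unfolding q_def len_def by simp
  have len': "length (created s') = Suc len" unfolding created' len_def by simp
  have bump_b: "bump y b j" using I bj by simp
  have pb: "pon y b j \<and> y!j \<noteq> y!(j mod b)" using bump_pon[OF bj(3) bj(2) bump_b] .
  have G1a: "\<forall>c<length (created s'). 0 < Bf' c \<and> Bf' c \<le> Jf' c \<and> Jf' c < length y \<and> pon y (Bf' c) (Jf' c) \<and>
        y!(Jf' c) \<noteq> y!(Jf' c mod Bf' c) \<and>
        (\<exists>t. rep_below s' (length y) (fresh s') (lchild s' (length y + c)) t \<and> rightmost_leaf t = Bf' c - 1)"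
  proof (intro allI impI)
    fix c assume c: "c < length (created s')"
    show "0 < Bf' c \<and> Bf' c \<le> Jf' c \<and> Jf' c < length y \<and> pon y (Bf' c) (Jf' c) \<and>
        y!(Jf' c) \<noteq> y!(Jf' c mod Bf' c) \<and>
        (\<exists>t. rep_below s' (length y) (fresh s') (lchild s' (length y + c)) t \<and> rightmost_leaf t = Bf' c - 1)"
    proof (cases "c = len")
      case True
      have "lchild s' (length y + c) = root s k" using True lenq unfolding s'_def n_def by simp
      moreover have "rightmost_leaf (Tr y k) = b - 1" using rightmost_Tr[OF kn] kb by simp
      ultimately show ?thesis using True bj jn pb stab[OF repk] unfolding Bf'_def Jf'_def n_def by auto
    next
      case False
      hence c2: "c < len" using c len' by simp
      have old: "0 < Bf c \<and> Bf c \<le> Jf c \<and> Jf c < length y \<and> pon y (Bf c) (Jf c) \<and>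
        y!(Jf c) \<noteq> y!(Jf c mod Bf c) \<and>
        (\<exists>t. rep_below s (length y) (fresh s) (lchild s (length y + c)) t \<and> rightmost_leaf t = Bf c - 1)"
        using G(1) c2 unfolding ginv_def len_def by blast
      have "lchild s' (length y + c) = lchild s (length y + c)" using c2 lenq unfolding s'_def n_def by simp
      thus ?thesis using old False stab unfolding Bf'_def Jf'_def n_def by auto
    qed
  qed
  have G1b: "\<forall>c c'. c < c' \<longrightarrow> c' < length (created s') \<longrightarrow> Jf' c < Jf' c' \<or> (Jf' c = Jf' c' \<and> Bf' c' < Bf' c)"
  proof (intro allI impI)
    fix c c' assume cc: "c < c'" "c' < length (created s')"
    show "Jf' c < Jf' c' \<or> (Jf' c = Jf' c' \<and> Bf' c' < Bf' c)"
    proof (cases "c' = len")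
      case True
      have c: "c < len" using cc True by simp
      hence "Jf c \<le> j \<and> (Jf c = j \<longrightarrow> b < Bf c)" using G(2) unfolding len_def by simp
      thus ?thesis using True c unfolding Bf'_def Jf'_def by auto
    next
      case False
      hence "c' < len" using cc len' by simp
      hence "Jf c < Jf c' \<or> (Jf c = Jf c' \<and> Bf c' < Bf c)" using G(1) cc unfolding ginv_def len_def by blast
      thus ?thesis using False cc \<open>c' < len\<close> unfolding Bf'_def Jf'_def by auto
    qed
  qed
  have G1: "ginv y s' Bf' Jf'" unfolding ginv_def using G1a G1b by blast
  have G2: "\<forall>c<length (created s'). Jf' c \<le> j \<and> (Jf' c = j \<longrightarrow> b' < Bf' c)"
  proof (intro allI impI)
    fix c assume c: "c < length (created s')"
    show "Jf' c \<le> j \<and> (Jf' c = j \<longrightarrow> b' < Bf' c)"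
    proof (cases "c = len")
      case True thus ?thesis using SM(2) unfolding Bf'_def Jf'_def by simp
    next
      case False
      hence "c < len" using c len' by simp
      hence "Jf c \<le> j \<and> (Jf c = j \<longrightarrow> b < Bf c)" using G(2) unfolding len_def by simp
      thus ?thesis using False SM(2) unfolding Bf'_def Jf'_def by auto
    qed
  qed
  have G3: "Bf' ` {..<length (created s')} = Suc ` ({0..j} - insert j (stk y b'))"
  proof -
    have "{..<length (created s')} = insert len {..<len}" using len' by auto
    hence "Bf' ` {..<length (created s')} = insert b (Bf ` {..<len})"
      unfolding Bf'_def by auto
    also have "\<dots> = insert b (Suc ` ({0..j} - insert j (stk y b)))" using G(3) unfolding len_def by simp
    also have "\<dots> = Suc ` ({0..j} - insert j (stk y b'))"
    proof -
      have "{0..j} - insert j (stk y b') = insert k ({0..j} - insert j (stk y b))"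
        using stkb k_notin kj by auto
      thus ?thesis using kb bj by simp
    qed
    finally show ?thesis .
  qed
  have bump': "sig y j < b' \<longrightarrow> bump y b' j"
  proof
    assume h: "sig y j < b'"
    show "bump y b' j"
      using bump_step[OF y jn h[unfolded b'_def] skl lk0 bj(2) bump_b] PL kj unfolding b'_def by simp
  qed
  have main: "iinv y j s0 s' (l + lam y k) (k - lam y k)"
    unfolding iinv_def l'
  proof (intro conjI)
    show "0 < l + lam y k" using I by simp
    show "l + lam y k \<le> lam y j" using l'2 SM(1) sl by simp
    show "k - lam y k = j - (l + lam y k)" by (rule k')
    show "lyns s' = lyns s0" "per s' = per s0" "idx s' = idx s0" using I unfolding s'_def by simp_all
    show "length y \<le> fresh s'" using fr I n_def by simp
    show "fresh s' = length y + length (created s')" using fr I len' n_def unfolding len_def by simp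
    show "\<forall>c<length (created s'). created s' ! c = length y + c"
      using I lenq len' unfolding created' n_def len_def by (auto simp: nth_append less_Suc_eq)
    show "\<forall>p<j. rep_below s' (length y) (fresh s') (root s' p) (Tr y p)"
      using I stab rootp unfolding n_def by auto
    show "lyndon (fac y b' (l + lam y k))" using SM(3) l'2 by simp
    show "rep_below s' (length y) (fresh s') (root s' j) (llt_at (fac y b' (l + lam y k)) b')"
      using newtree treeeq l'2 unfolding s'_def n_def by simp
    show "\<forall>p. b' \<le> p \<longrightarrow> p < j \<longrightarrow> b' \<le> sig y p" using SM(5) .
    show "sig y j < b' \<longrightarrow> bump y b' j" by (rule bump')
    show "set (created s') = nodes s' (root s' j) (llt_at (fac y b' (l + lam y k)) b') \<union>
      (\<Union>p\<in>stk y b'. nodes s' (root s' p) (Tr y p))" using setc l'2 by simp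
    show "\<exists>Bf Jf. ginv y s' Bf Jf \<and> (\<forall>c<length (created s'). Jf c \<le> j \<and> (Jf c = j \<longrightarrow> b' < Bf c)) \<and>
       Bf ` {..<length (created s')} = Suc ` ({0..j} - insert j (stk y b'))"
      using G1 G2 G3 by blast
  qed
  show ?thesis using main step by simp
qed



definition oinv :: "'a::linorder list \<Rightarrow> nat \<Rightarrow> alg_state \<Rightarrow> bool" where
  "oinv y j s \<longleftrightarrow>
    0 < per s \<and> per s \<le> Suc j \<and> idx s = Suc j mod per s \<and> pon y (per s) (Suc j) \<and> lyndon (take (per s) y) \<and>
    (\<forall>p\<le>j. lyns s p = lam y p) \<and> (\<forall>p\<le>j. fac y (sig y p) (lam y p) = take (lam y p) y) \<and>
    length y \<le> fresh s \<and> fresh s = length y + length (created s) \<and>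
    (\<forall>c<length (created s). created s ! c = length y + c) \<and>
    (\<forall>p\<le>j. rep_below s (length y) (fresh s) (root s p) (Tr y p)) \<and>
    set (created s) = (\<Union>p\<in>chainS y j. nodes s (root s p) (Tr y p)) \<and>
    (\<exists>Bf Jf. ginv y s Bf Jf \<and> (\<forall>c<length (created s). Jf c \<le> j) \<and>
       Bf ` {..<length (created s)} = Suc ` ({0..j} - chainS y j))"

lemma llt_single: "llt_at [a] s = Leaf s"
  by (subst llt_at.simps) simp

lemma lam0: "0 < length y \<Longrightarrow> lam y 0 = 1"
proof (rule lam_eqI)
  assume "0 < length y"
  thus "lyndon (fac y (Suc 0 - 1) 1)" using fac_one[of 0 y] by (simp add: lyndon_single)
qed auto

lemma oinv_init:
  fixes y :: "'a::linorder list"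
  assumes "lyndon y" "0 < length y"
  shows "oinv y 0 (init_state (length y))"
proof -
  have l0: "lam y 0 = 1" using lam0 assms by simp
  have s0: "sig y 0 = 0" unfolding sig_def l0 by simp
  have ch: "chainS y 0 = {0}" using chain_unfold[of y 0] s0 by (simp add: stk_def)
  have f0: "fac y 0 1 = [y!0]" using fac_one[of 0 y] assms by simp
  have T0: "Tr y 0 = Leaf 0" unfolding Tr_def l0 s0 f0 by (rule llt_single)
  have g: "ginv y (init_state (length y)) id id" unfolding ginv_def by (simp add: init_state_def)
  have t1: "lyndon (take 1 y)" using assms by (cases y) (auto simp: lyndon_single)
  show ?thesis unfolding oinv_def
    apply (intro conjI)
    subgoal by (simp add: init_state_def)
    subgoal by (simp add: init_state_def)
    subgoal by (simp add: init_state_def)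
    subgoal by (simp add: init_state_def pon_def)
    subgoal using t1 by (simp add: init_state_def)
    subgoal using l0 by (simp add: init_state_def)
    subgoal using l0 s0 by (simp add: fac_zero)
    subgoal by (simp add: init_state_def)
    subgoal by (simp add: init_state_def)
    subgoal by (simp add: init_state_def)
    subgoal using T0 assms by (auto simp: init_state_def intro: rb_leaf)
    subgoal using ch T0 by (simp add: init_state_def)
    subgoal using g ch by (intro exI[of _ id]) (simp add: init_state_def)
    done
qed

lemma inner_step_lyns: "lyns (fst (inner_step j st)) = lyns (fst st)"
  unfolding inner_step_def by (auto simp: Let_def split: prod.splits)

lemma inner_step_snd: "fst (snd (inner_step j st)) = fst (snd st) + lyns (fst st) (snd (snd st))"
  unfolding inner_step_def by (auto simp: Let_def split: prod.splits)

lemma ostep: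
  fixes y :: "'a::linorder list"
  assumes y: "lyndon y" and j0: "0 < j" and jn: "j < length y" and O: "oinv y (j - 1) s"
  shows "\<exists>s'. outer_step y j s = Some s' \<and> oinv y j s'"
proof -
  define n where "n = length y"
  define q where "q = per s"
  have Sj: "Suc (j - 1) = j" using j0 by simp
  have OX: "(0 < q) \<and> (q \<le> j) \<and> (idx s = j mod q) \<and> (pon y q j) \<and> (lyndon (take q y)) \<and> (\<forall>p\<le>j-1. lyns s p = lam y p) \<and> (\<forall>p\<le>j-1. fac y (sig y p) (lam y p) = take (lam y p) y) \<and> (n \<le> fresh s) \<and> (fresh s = n + length (created s)) \<and> (\<forall>c<length (created s). created s ! c = n + c) \<and> (\<forall>p\<le>j-1. rep_below s n (fresh s) (root s p) (Tr y p)) \<and> (set (created s) = (\<Union>p\<in>chainS y (j-1). nodes s (root s p) (Tr y p))) \<and> (\<exists>Bf Jf. ginv y s Bf Jf \<and> (\<forall>c<length (created s). Jf c \<le> j - 1) \<and>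
       Bf ` {..<length (created s)} = Suc ` ({0..j-1} - chainS y (j-1)))"
    using O[unfolded oinv_def Sj q_def[symmetric] n_def[symmetric]] .
  note O1 = OX[THEN conjunct1] OX[THEN conjunct2, THEN conjunct1] OX[THEN conjunct2, THEN conjunct2, THEN conjunct1] OX[THEN conjunct2, THEN conjunct2, THEN conjunct2, THEN conjunct1] OX[THEN conjunct2, THEN conjunct2, THEN conjunct2, THEN conjunct2, THEN conjunct1] OX[THEN conjunct2, THEN conjunct2, THEN conjunct2, THEN conjunct2, THEN conjunct2, THEN conjunct1] OX[THEN conjunct2, THEN conjunct2, THEN conjunct2, THEN conjunct2, THEN conjunct2, THEN conjunct2, THEN conjunct1] OX[THEN conjunct2, THEN conjunct2, THEN conjunct2, THEN conjunct2, THEN conjunct2, THEN conjunct2, THEN conjunct2, THEN conjunct1] OX[THEN conjunct2, THEN conjunct2, THEN conjunct2, THEN conjunct2, THEN conjunct2, THEN conjunct2, THEN conjunct2, THEN conjunct2, THEN conjunct1] OX[THEN conjunct2, THEN conjunct2, THEN conjunct2, THEN conjunct2, THEN conjunct2, THEN conjunct2, THEN conjunct2, THEN conjunct2, THEN conjunct2, THEN conjunct1] OX[THEN conjunct2, THEN conjunct2, THEN conjunct2, THEN conjunct2, THEN conjunct2, THEN conjunct2, THEN conjunct2, THEN conjunct2, THEN conjunct2, THEN conjunct2, THEN conjunct1] OX[THEN conjunct2, THEN conjunct2, THEN conjunct2, THEN conjunct2, THEN conjunct2, THEN conjunct2, THEN conjunct2, THEN conjunct2, THEN conjunct2, THEN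 conjunct2, THEN conjunct2, THEN conjunct1] OX[THEN conjunct2, THEN conjunct2, THEN conjunct2, THEN conjunct2, THEN conjunct2, THEN conjunct2, THEN conjunct2, THEN conjunct2, THEN conjunct2, THEN conjunct2, THEN conjunct2, THEN conjunct2]
  define s1 where "s1 = s\<lparr>root := (root s)(j := j)\<rparr>"
  define s2 where "s2 = (if y ! j \<noteq> y ! idx s1
                then s1\<lparr> lyns := (lyns s1)(j := Suc j), per := Suc j, idx := 0 \<rparr>
                else s1\<lparr> lyns := (lyns s1)(j := lyns s1 (idx s1)),
                         idx := (Suc (idx s1)) mod per s1 \<rparr>)"
  have os: "outer_step y j s = inner_loop j s2"
    unfolding outer_step_def s2_def s1_def by (simp add: Let_def)
  have s2f: "lchild s2 = lchild s" "rchild s2 = rchild s" "fresh s2 = fresh s" "created s2 = created s"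
    "root s2 = (root s)(j := j)"
    unfolding s2_def s1_def by simp_all
  have idx1: "idx s1 = j mod q" "per s1 = q" "lyns s1 = lyns s" using O1(3) unfolding s1_def q_def by simp_all
  have A: "0 < per s2 \<and> per s2 \<le> Suc j \<and> idx s2 = Suc j mod per s2 \<and> pon y (per s2) (Suc j) \<and>
      lyndon (take (per s2) y) \<and> (\<forall>p\<le>j. lyns s2 p = lam y p) \<and>
      (\<forall>p\<le>j. fac y (sig y p) (lam y p) = take (lam y p) y)"
  proof (cases "y ! j \<noteq> y ! (j mod q)")
    case True
    have s2e: "s2 = s1\<lparr> lyns := (lyns s1)(j := Suc j), per := Suc j, idx := 0 \<rparr>"
      unfolding s2_def using True idx1 by simp
    have ly: "lyndon (take (Suc j) y)" using duval[OF y O1(1) O1(2) jn O1(4) True O1(5)] .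
    have lj: "lam y j = Suc j"
    proof (rule lam_eqI)
      show "lyndon (fac y (Suc j - Suc j) (Suc j))" using ly by (simp add: fac_zero)
    qed auto
    have sj: "sig y j = 0" unfolding sig_def lj by simp
    show ?thesis
    proof (intro conjI)
      show "0 < per s2" "per s2 \<le> Suc j" "idx s2 = Suc j mod per s2" unfolding s2e by simp_all
      show "pon y (per s2) (Suc j)" unfolding s2e pon_def by simp
      show "lyndon (take (per s2) y)" unfolding s2e using ly by simp
      show "\<forall>p\<le>j. lyns s2 p = lam y p"
      proof (intro allI impI)
        fix p assume "p \<le> j"
        thus "lyns s2 p = lam y p" using O1(6) lj idx1 unfolding s2e by (cases "p = j") auto
      qed
      show "\<forall>p\<le>j. fac y (sig y p) (lam y p) = take (lam y p) y"
      proof (intro allI impI)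
        fix p assume "p \<le> j"
        thus "fac y (sig y p) (lam y p) = take (lam y p) y" using O1(7) lj sj
          by (cases "p = j") (auto simp: fac_zero)
      qed
    qed
  next
    case False
    define r where "r = j mod q"
    have s2e: "s2 = s1\<lparr> lyns := (lyns s1)(j := lyns s1 (idx s1)), idx := (Suc (idx s1)) mod per s1 \<rparr>"
      unfolding s2_def using False idx1 by simp
    have pS: "pon y q (Suc j)" using O1(4) False unfolding pon_def by (auto simp: less_Suc_eq)
    have LP: "lam y j = lam y r \<and> fac y (sig y j) (lam y j) = fac y (sig y r) (lam y r)"
      using lam_periodic[OF y O1(1) O1(2) jn pS] unfolding r_def .
    have rq: "r < q" unfolding r_def using O1(1) by simp
    hence rj: "r \<le> j - 1" using O1(2) by simp
    show ?thesis
    proof (intro conjI)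
      show "0 < per s2" "per s2 \<le> Suc j" using O1 idx1 unfolding s2e by simp_all
      show "idx s2 = Suc j mod per s2" using idx1 unfolding s2e by (simp add: mod_Suc_eq)
      show "pon y (per s2) (Suc j)" using pS idx1 unfolding s2e by simp
      show "lyndon (take (per s2) y)" using O1(5) idx1 unfolding s2e by simp
      show "\<forall>p\<le>j. lyns s2 p = lam y p"
      proof (intro allI impI)
        fix p assume "p \<le> j"
        thus "lyns s2 p = lam y p" using O1(6) LP idx1 rj unfolding s2e r_def by (cases "p = j") auto
      qed
      show "\<forall>p\<le>j. fac y (sig y p) (lam y p) = take (lam y p) y"
      proof (intro allI impI)
        fix p assume "p \<le> j"
        thus "fac y (sig y p) (lam y p) = take (lam y p) y" using O1(7) LP rj
          by (cases "p = j") auto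
      qed
    qed
  qed
  have LY: "\<forall>p\<le>j. lyns s2 p = lam y p" and PLj: "\<forall>p\<le>j. fac y (sig y p) (lam y p) = take (lam y p) y"
    using A by blast+
  have PL: "\<forall>p<j. fac y (sig y p) (lam y p) = take (lam y p) y" using PLj by simp
  have agr2: "\<forall>q'. n \<le> q' \<longrightarrow> q' < F \<longrightarrow> lchild s2 q' = lchild s q' \<and> rchild s2 q' = rchild s q'" for F
    using s2f by simp
  have init: "iinv y j s2 s2 1 (j - 1)"
    unfolding iinv_def
  proof (intro conjI)
    show "0 < (1::nat)" by simp
    show "1 \<le> lam y j" using lam_pos[OF jn] by simp
    show "j - 1 = j - 1" "lyns s2 = lyns s2" "per s2 = per s2" "idx s2 = idx s2" by simp_all
    show "length y \<le> fresh s2" "fresh s2 = length y + length (created s2)"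
      "\<forall>c<length (created s2). created s2 ! c = length y + c"
      using O1 s2f unfolding n_def by simp_all
    show "\<forall>p<j. rep_below s2 (length y) (fresh s2) (root s2 p) (Tr y p)"
    proof (intro allI impI)
      fix p assume p: "p < j"
      hence "rep_below s n (fresh s) (root s p) (Tr y p)" using O1(11) by simp
      hence "rep_below s2 n (fresh s) (root s p) (Tr y p)" using rb_agree agr2 by blast
      thus "rep_below s2 (length y) (fresh s2) (root s2 p) (Tr y p)" using s2f p unfolding n_def by simp
    qed
    have fj: "fac y (Suc j - 1) 1 = [y!j]" using fac_one[of j y] jn j0 by simp
    show "lyndon (fac y (Suc j - 1) 1)" using fj by (simp add: lyndon_single)
    show "rep_below s2 (length y) (fresh s2) (root s2 j) (llt_at (fac y (Suc j - 1) 1) (Suc j - 1))"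
      using fj s2f jn j0 by (simp add: llt_single rb_leaf)
    show "\<forall>p. Suc j - 1 \<le> p \<longrightarrow> p < j \<longrightarrow> Suc j - 1 \<le> sig y p" by simp
    show "sig y j < Suc j - 1 \<longrightarrow> bump y (Suc j - 1) j" using bump_base[OF y jn] by simp
    have stj: "stk y (Suc j - 1) = chainS y (j - 1)" unfolding stk_def using j0 by simp
    have chl: "p \<le> j - 1" if "p \<in> chainS y (j - 1)" for p
      using chain_le[of y "j - 1" p] that jn unfolding chainS_def by simp
    show "set (created s2) = nodes s2 (root s2 j) (llt_at (fac y (Suc j - 1) 1) (Suc j - 1)) \<union>
                      (\<Union>p\<in>stk y (Suc j - 1). nodes s2 (root s2 p) (Tr y p))"
    proof -
      have "(\<Union>p\<in>stk y (Suc j - 1). nodes s2 (root s2 p) (Tr y p)) = (\<Union>p\<in>chainS y (j-1). nodes s (root s p) (Tr y p))"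
        unfolding stj
      proof (rule SUP_cong[OF refl])
        fix p assume "p \<in> chainS y (j - 1)"
        hence p: "p \<le> j - 1" by (rule chl)
        hence "p \<noteq> j" using j0 by arith
        hence "root s2 p = root s p" using s2f by simp
        moreover have "nodes s2 (root s p) (Tr y p) = nodes s (root s p) (Tr y p)"
          using nodes_agree[OF _ agr2] O1(11) p by blast
        ultimately show "nodes s2 (root s2 p) (Tr y p) = nodes s (root s p) (Tr y p)" by simp
      qed
      moreover have "nodes s2 (root s2 j) (llt_at (fac y (Suc j - 1) 1) (Suc j - 1)) = {}"
        using fj by (simp add: llt_single)
      ultimately show ?thesis using O1(12) s2f by simp
    qed
    show "\<exists>Bf Jf. ginv y s2 Bf Jf \<and> (\<forall>c<length (created s2). Jf c \<le> j \<and> (Jf c = j \<longrightarrow> Suc j - 1 < Bf c)) \<and>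
       Bf ` {..<length (created s2)} = Suc ` ({0..j} - insert j (stk y (Suc j - 1)))"
    proof -
      obtain Bf Jf where G: "ginv y s Bf Jf" "\<forall>c<length (created s). Jf c \<le> j - 1"
        "Bf ` {..<length (created s)} = Suc ` ({0..j-1} - chainS y (j-1))" using O1(13) by blast
      have "ginv y s2 Bf Jf"
      proof -
        have h: "rep_below s2 (length y) (fresh s) r t"
          if "rep_below s (length y) (fresh s) r t" for r t
          using rb_agree[OF that agr2[unfolded n_def]] .
        show ?thesis using G(1) h unfolding ginv_def s2f(1,3,4) by blast
      qed
      moreover have "{0..j} - insert j (stk y (Suc j - 1)) = {0..j-1} - chainS y (j-1)"
        using stj chl j0 by auto
      ultimately show ?thesis using G s2f j0 by (intro exI[of _ Bf] exI[of _ Jf]) auto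
    qed
  qed
  define P where "P = (\<lambda>(st::alg_state \<times> nat \<times> nat). iinv y j s2 (fst st) (fst (snd st)) (snd (snd st)))"
  define B where "B = (\<lambda>(s::alg_state, l::nat, k::nat). l < lyns s j)"
  have Pstep: "P (inner_step j st)" if "P st" "B st" for st
  proof -
    obtain s' l k where st: "st = (s', l, k)" by (cases st) auto
    have "iinv y j s2 s' l k" "l < lyns s' j" using that st unfolding P_def B_def by simp_all
    from istep[OF y jn j0 PL LY this] show ?thesis unfolding P_def st by (simp split: prod.splits)
  qed
  have wf: "wf {(t, st). (P st \<and> B st) \<and> t = inner_step j st}"
  proof (rule wf_subset[OF wf_measure[of "\<lambda>st. lyns (fst st) j - fst (snd st)"]])
    show "{(t, st). (P st \<and> B st) \<and> t = inner_step j st} \<subseteq> measure (\<lambda>st. lyns (fst st) j - fst (snd st))"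
    proof
      fix x assume "x \<in> {(t, st). (P st \<and> B st) \<and> t = inner_step j st}"
      then obtain t st where x: "x = (t, st)" "P st" "B st" "t = inner_step j st" by blast
      obtain s' l k where st: "st = (s', l, k)" by (cases st) auto
      have iv: "iinv y j s2 s' l k" "l < lyns s' j" using x st unfolding P_def B_def by simp_all
      have "lyns s' = lyns s2" "0 < l" "k = j - l" using iv(1) unfolding iinv_def by simp_all
      hence "lyns s' k = lam y k" using LY by simp
      moreover have "k < length y" using \<open>k = j - l\<close> jn by simp
      ultimately have "0 < lyns s' k" using lam_pos by simp
      thus "x \<in> measure (\<lambda>st. lyns (fst st) j - fst (snd st))"
        using x st iv inner_step_lyns[of j st] inner_step_snd[of j st] by simp
    qed
  qed
  have P0: "P (s2, 1, j - 1)" using init unfolding P_def by simp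
  obtain stf where W: "while_option B (inner_step j) (s2, 1, j - 1) = Some stf"
    using wf_while_option_Some[OF wf Pstep P0] by blast
  have Pf: "P stf" using while_option_rule[where P = P, OF Pstep W P0] by blast
  have Bf: "\<not> B stf" using while_option_stop[OF W] .
  obtain sf lf kf where stf: "stf = (sf, lf, kf)" by (cases stf) auto
  have il: "inner_loop j s2 = Some sf"
    unfolding inner_loop_def using W stf unfolding B_def by simp
  have IF: "iinv y j s2 sf lf kf" using Pf stf unfolding P_def by simp
  hence lf: "lf \<le> lam y j" "lyns sf = lyns s2" unfolding iinv_def by simp_all
  hence lfe: "lf = lam y j" using Bf stf LY unfolding B_def by simp
  have bsig: "Suc j - lf = sig y j" unfolding sig_def lfe by simp
  note IFX = IF[unfolded iinv_def bsig]
  note IF2 = IFX[THEN conjunct2, THEN conjunct2, THEN conjunct2, THEN conjunct1] IFX[THEN conjunct2, THEN conjunct2, THEN conjunct2, THEN conjunct2, THEN conjunct1] IFX[THEN conjunct2, THEN conjunct2, THEN conjunct2, THEN conjunct2, THEN conjunct2, THEN conjunct1] IFX[THEN conjunct2, THEN conjunct2, THEN conjunct2, THEN conjunct2, THEN conjunct2, THEN conjunct2, THEN conjunct1] IFX[THEN conjunct2, THEN conjunct2, THEN conjunct2, THEN conjunct2, THEN conjunct2, THEN conjunct2, THEN conjunct2, THEN conjunct1] IFX[THEN conjunct2, THEN conjunct2, THEN conjunct2, THEN conjunct2, THEN conjunct2, THEN conjunct2, THEN conjunct2, THEN conjunct2, THEN conjunct1] IFX[THEN conjunct2, THEN conjunct2,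 THEN conjunct2, THEN conjunct2, THEN conjunct2, THEN conjunct2, THEN conjunct2, THEN conjunct2, THEN conjunct2, THEN conjunct1] IFX[THEN conjunct2, THEN conjunct2, THEN conjunct2, THEN conjunct2, THEN conjunct2, THEN conjunct2, THEN conjunct2, THEN conjunct2, THEN conjunct2, THEN conjunct2, THEN conjunct2, THEN conjunct1] IFX[THEN conjunct2, THEN conjunct2, THEN conjunct2, THEN conjunct2, THEN conjunct2, THEN conjunct2, THEN conjunct2, THEN conjunct2, THEN conjunct2, THEN conjunct2, THEN conjunct2, THEN conjunct2, THEN conjunct2, THEN conjunct2, THEN conjunct1] IFX[THEN conjunct2, THEN conjunct2, THEN conjunct2, THEN conjunct2, THEN conjunct2, THEN conjunct2, THEN conjunct2, THEN conjunct2, THEN conjunct2, THEN conjunct2, THEN conjunct2, THEN conjunct2, THEN conjunct2, THEN conjunct2, THEN conjunct2]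
  have "oinv y j sf"
    unfolding oinv_def
  proof (intro conjI)
    have same: "per sf = per s2" "idx sf = idx s2" "lyns sf = lyns s2" using IF2(1-3) by simp_all
    show "0 < per sf" "per sf \<le> Suc j" "idx sf = Suc j mod per sf" "pon y (per sf) (Suc j)"
      "lyndon (take (per sf) y)" "\<forall>p\<le>j. lyns sf p = lam y p"
      using A same by simp_all
    show "\<forall>p\<le>j. fac y (sig y p) (lam y p) = take (lam y p) y" using PLj .
    show "length y \<le> fresh sf" "fresh sf = length y + length (created sf)"
      "\<forall>c<length (created sf). created sf ! c = length y + c" using IF2(4-6) by simp_all
    show "\<forall>p\<le>j. rep_below sf (length y) (fresh sf) (root sf p) (Tr y p)"
    proof (intro allI impI)
      fix p assume "p \<le> j"
      show "rep_below sf (length y) (fresh sf) (root sf p) (Tr y p)"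
      proof (cases "p = j")
        case True thus ?thesis using IF2(8) lfe unfolding Tr_def by simp
      next
        case False thus ?thesis using IF2(7) \<open>p \<le> j\<close> by simp
      qed
    qed
    show "set (created sf) = (\<Union>p\<in>chainS y j. nodes sf (root sf p) (Tr y p))"
      using IF2(9) lfe chain_unfold[of y j] unfolding Tr_def by simp
    show "\<exists>Bf Jf. ginv y sf Bf Jf \<and> (\<forall>c<length (created sf). Jf c \<le> j) \<and>
       Bf ` {..<length (created sf)} = Suc ` ({0..j} - chainS y j)"
    proof -
      obtain Bf Jf where G: "ginv y sf Bf Jf" "\<forall>c<length (created sf). Jf c \<le> j \<and> (Jf c = j \<longrightarrow> sig y j < Bf c)"
        "Bf ` {..<length (created sf)} = Suc ` ({0..j} - insert j (stk y (sig y j)))" using IF2(10) by blast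
      show ?thesis using G chain_unfold[of y j] by (intro exI[of _ Bf] exI[of _ Jf]) simp
    qed
  qed
  thus ?thesis using os il by simp
qed



lemma fold_inv:
  fixes y :: "'a::linorder list"
  assumes y: "lyndon y" and n0: "0 < length y"
  shows "j < length y \<Longrightarrow> \<exists>s. fold (\<lambda>j so. Option.bind so (outer_step y j)) [1..<Suc j]
            (Some (init_state (length y))) = Some s \<and> oinv y j s"
proof (induction j)
  case 0 thus ?case using oinv_init[OF y n0] by simp
next
  case (Suc j)
  then obtain s where s: "fold (\<lambda>j so. Option.bind so (outer_step y j)) [1..<Suc j]
            (Some (init_state (length y))) = Some s" "oinv y j s" by auto
  obtain s' where s': "outer_step y (Suc j) s = Some s'" "oinv y (Suc j) s'"
    using ostep[OF y _ Suc.prems] s(2) by auto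
  have "[1..<Suc (Suc j)] = [1..<Suc j] @ [Suc j]" by simp
  hence "fold (\<lambda>j so. Option.bind so (outer_step y j)) [1..<Suc (Suc j)] (Some (init_state (length y)))
       = Option.bind (Some s) (outer_step y (Suc j))" using s(1) by simp
  thus ?case using s' by simp
qed

theorem theorem6:
  fixes y :: "'a::linorder list"
  assumes "lyndon y" and "length y > 1"
  shows "\<exists>s. left_lyndon_tree_alg y = Some s
           \<and> represents s (length y) (root s (length y - 1)) (LLT y)
           \<and> length (created s) = length y - 1
           \<and> {q. reach s (length y) (root s (length y - 1)) q \<and> length y \<le> q} = set (created s)
           \<and> (\<forall>i j. i < j \<and> j < length (created s) \<longrightarrow>
                 inf_prec (assoc_prefix y s (created s ! i)) (assoc_prefix y s (created s ! j)))
           \<and> (\<lambda>q. assoc_prefix y s q) ` set (created s) = {take m y | m. 0 < m \<and> m < length y}"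
proof -
  define n where "n = length y"
  have y: "lyndon y" using assms(1) .
  have n1: "1 < n" using assms(2) unfolding n_def .
  have nn: "n - 1 < length y" using n1 unfolding n_def by simp
  have n0: "0 < length y" using n1 unfolding n_def by arith
  from fold_inv[OF y n0 nn] obtain s where F: "fold (\<lambda>j so. Option.bind so (outer_step y j)) [1..<Suc (n - 1)]
            (Some (init_state (length y))) = Some s" and O: "oinv y (n - 1) s"
    by blast
  have sn: "Suc (n - 1) = length y" using n1 unfolding n_def by simp
  have eqn: "[1..<length y] = [1..<Suc (n - 1)]" by (simp only: sn)
  have alg: "left_lyndon_tree_alg y = Some s"
    unfolding left_lyndon_tree_alg_def eqn using F .
  have fn: "fac y 0 n = y" unfolding fac_def n_def by simp
  have lamn: "lam y (n - 1) = n"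
  proof (rule lam_eqI)
    show "lyndon (fac y (Suc (n - 1) - n) n)" using fn y n1 by simp
  qed (use n1 in auto)
  have sig0: "sig y (n - 1) = 0" unfolding sig_def lamn using n1 by simp
  have chn: "chainS y (n - 1) = {n - 1}" using chain_unfold[of y "n - 1"] sig0 by (simp add: stk_def)
  have Tn: "Tr y (n - 1) = LLT y" unfolding Tr_def lamn sig0 fn LLT_def ..
  have O1: "\<forall>p\<le>n-1. rep_below s n (fresh s) (root s p) (Tr y p)"
    "set (created s) = (\<Union>p\<in>chainS y (n-1). nodes s (root s p) (Tr y p))"
    "\<exists>Bf Jf. ginv y s Bf Jf \<and> (\<forall>c<length (created s). Jf c \<le> n - 1) \<and>
       Bf ` {..<length (created s)} = Suc ` ({0..n-1} - chainS y (n-1))"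
    "\<forall>c<length (created s). created s ! c = n + c"
    using O unfolding oinv_def n_def by blast+
  have rep: "represents s n (root s (n - 1)) (LLT y)"
    using O1(1) Tn rb_represents by fastforce
  have setc: "set (created s) = nodes s (root s (n - 1)) (LLT y)" using O1(2) chn Tn by simp
  have reachc: "{q. reach s n (root s (n - 1)) q \<and> n \<le> q} = set (created s)"
    using reach_nodes[OF rep] setc by simp
  obtain Bf Jf where G: "ginv y s Bf Jf" "Bf ` {..<length (created s)} = Suc ` ({0..n-1} - {n - 1})"
    using O1(3) chn by auto
  define len where "len = length (created s)"
  have Gc: "\<forall>c<len. 0 < Bf c \<and> Bf c \<le> Jf c \<and> Jf c < length y \<and> pon y (Bf c) (Jf c) \<and>
        y!(Jf c) \<noteq> y!(Jf c mod Bf c) \<and>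
        (\<exists>t. rep_below s (length y) (fresh s) (lchild s (length y + c)) t \<and> rightmost_leaf t = Bf c - 1)"
    and Go: "\<forall>c c'. c < c' \<longrightarrow> c' < len \<longrightarrow> Jf c < Jf c' \<or> (Jf c = Jf c' \<and> Bf c' < Bf c)"
    using G(1) unfolding ginv_def len_def by blast+
  have assoc: "assoc_prefix y s (created s ! c) = take (Bf c) y" if c: "c < len" for c
  proof -
    obtain t where t: "rep_below s n (fresh s) (lchild s (n + c)) t" "rightmost_leaf t = Bf c - 1"
      using Gc c unfolding n_def by blast
    have r: "represents s n (lchild s (n + c)) t" using rb_represents[OF t(1)] .
    have "(THE t. represents s n (lchild s (n + c)) t) = t"
      using r represents_fun by blast
    moreover have "created s ! c = n + c" using O1(4) c unfolding len_def by simp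
    moreover have "0 < Bf c" using Gc c by simp
    ultimately show ?thesis unfolding assoc_prefix_def n_def[symmetric] using t(2) by simp
  qed
  have order: "inf_prec (take (Bf c) y) (take (Bf c') y)" if cc: "c < c'" "c' < len" for c c'
  proof -
    have a: "0 < Bf c" "Bf c \<le> Jf c" "Jf c < length y" "pon y (Bf c) (Jf c)" "y!(Jf c) \<noteq> y!(Jf c mod Bf c)"
      using Gc cc by auto
    have b: "0 < Bf c'" "Bf c' \<le> Jf c'" "Jf c' < length y" "pon y (Bf c') (Jf c')"
      using Gc cc by auto
    from Go cc have "Jf c < Jf c' \<or> (Jf c = Jf c' \<and> Bf c' < Bf c)" by blast
    thus ?thesis
    proof
      assume h: "Jf c < Jf c'"
      have "pon y (Bf c') (Suc (Jf c))" using pon_mono[OF b(4)] h by simp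
      hence "inf_lexless (pow_inf (take (Bf c) y)) (pow_inf (take (Bf c') y))"
        using lemD[OF y a(1) b(1) _ _ a(3) a(4) a(5)] a b by simp
      thus ?thesis unfolding inf_prec_def by simp
    next
      assume h: "Jf c = Jf c' \<and> Bf c' < Bf c"
      show ?thesis using lemW[OF y b(1) _ a(2)] h b a by simp
    qed
  qed
  have inj: "inj_on Bf {..<len}"
  proof (rule inj_onI)
    fix c c' assume "c \<in> {..<len}" "c' \<in> {..<len}" "Bf c = Bf c'"
    thus "c = c'" using order inf_prec_irrefl by (metis lessThan_iff linorder_neqE_nat)
  qed
  have cardB: "card (Bf ` {..<len}) = len" using card_image[OF inj] by simp
  have "card (Suc ` ({0..n-1} - {n - 1})) = n - 1"
  proof -
    have "{0..n-1} - {n - 1} = {..<n-1}" by auto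
    thus ?thesis by (simp add: card_image)
  qed
  hence lenc: "length (created s) = n - 1" using cardB G(2) unfolding len_def by simp
  have setc2: "set (created s) = (\<lambda>c. created s ! c) ` {..<len}"
    unfolding len_def by (auto simp: in_set_conv_nth)
  have img: "(\<lambda>q. assoc_prefix y s q) ` set (created s) = {take m y | m. 0 < m \<and> m < length y}"
  proof -
    have "(\<lambda>q. assoc_prefix y s q) ` set (created s) = (\<lambda>c. take (Bf c) y) ` {..<len}"
      unfolding setc2 image_image using assoc by (intro image_cong) auto
    also have "\<dots> = (\<lambda>m. take m y) ` (Bf ` {..<len})" by (simp add: image_image)
    also have "\<dots> = (\<lambda>m. take m y) ` (Suc ` ({0..n-1} - {n - 1}))" using G(2) unfolding len_def by simp
    also have "Suc ` ({0..n-1} - {n - 1}) = {m. 0 < m \<and> m < n}"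
    proof
      show "Suc ` ({0..n-1} - {n - 1}) \<subseteq> {m. 0 < m \<and> m < n}" using n1 by auto
      show "{m. 0 < m \<and> m < n} \<subseteq> Suc ` ({0..n-1} - {n - 1})"
      proof
        fix m assume "m \<in> {m. 0 < m \<and> m < n}"
        hence "m = Suc (m - 1)" "m - 1 \<in> {0..n-1} - {n - 1}" by auto
        thus "m \<in> Suc ` ({0..n-1} - {n - 1})" by (metis imageI)
      qed
    qed
    finally show ?thesis unfolding n_def by blast
  qed
  show ?thesis
  proof (intro exI[of _ s] conjI)
    show "left_lyndon_tree_alg y = Some s" by (rule alg)
    show "represents s (length y) (root s (length y - 1)) (LLT y)" using rep unfolding n_def .
    show "length (created s) = length y - 1" using lenc unfolding n_def .
    show "{q. reach s (length y) (root s (length y - 1)) q \<and> length y \<le> q} = set (created s)"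
      using reachc unfolding n_def .
    show "\<forall>i j. i < j \<and> j < length (created s) \<longrightarrow>
                 inf_prec (assoc_prefix y s (created s ! i)) (assoc_prefix y s (created s ! j))"
      using order assoc unfolding len_def by auto
    show "(\<lambda>q. assoc_prefix y s q) ` set (created s) = {take m y | m. 0 < m \<and> m < length y}"
      by (rule img)
  qed
qed


end
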